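(* Assume the wavelets are compactly supported, let $s>0$, $p\in[1,+\infty)$ with $d-sp>0$, let $d'\in(d-sp,d)$ and let $(K,t,N,a,(\Theta_n),\mu)$ be adapted Cantor data of dimension at least $d'$. For every $\alpha\in(0,d-sp)$ and every $G\subset K$ with $\overline{\dim}_B(G)<\alpha$, there exists $f\in B^{s,1}_p(\mathbb R^d)$ with $\|f\|\le1$ such that: (1) for all $x\in K$ and all $j\in\mathbb N$, $P_jf(x)\ge0$; (2) for all $x\in G$, $\liminf_j\frac{\log|P_jf(x)|}{j\log2}\ge\frac{d-sp-\alpha}p$.
   Context: Standing setup. $(V_j)_{j\in\mathbb Z}$ is an orthogonal multiresolution analysis of $L^2(\mathbb R^d)$ with scaling function $\varphi$, and $\psi^{(1)},\dots,\psi^{(2^d-1)}$ associated wavelets (the functions $2^{dj/2}\psi^{(i)}(2^j\cdot-k)$ form an orthonormal basis of $L^2(\mathbb R^d)$), smooth (at least $\lfloor s\rfloor+1$ derivatives). For $j\ge0$, $k\in\mathbb Z^d$, the dyadic cube $(j,k)=\prod_m[k_m2^{-j},(k_m+1)2^{-j})$, $\Lambda_j$ the set of such cubes, $\psi^{(i)}_{(j,k)}(x)=\psi^{(i)}(2^jx-k)$; for a closed dyadic cube $\mu=\prod_m[k_m2^{-j},(k_m+1)2^{-j}]$ write $\psi^{(1)}_\mu=\psi^{(1)}(2^j\cdot-k)$. For $f$: $C_k=\int\overline{\varphi(x-k)}f$, $c^{(i)}_\lambda=2^{dj}\int\overline{\psi^{(i)}_\lambda}f$, $Q_lf=\sum_i\sum_{\lambda\in\Lambda_l}c^{(i)}_\lambda\psi^{(i)}_\lambda$,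 $P_jf=\sum_kC_k\varphi(\cdot-k)+\sum_{0\le l<j}Q_lf$. $B^{s,q}_p(\mathbb R^d)$: $f$ with $(C_k)\in\ell^p$ and $(\varepsilon_j)\in\ell^q$, $\varepsilon_j=2^{(s-d/p)j}(\sum_i\sum_{\lambda\in\Lambda_j}|c^{(i)}_\lambda|^p)^{1/p}$, norm $\|(C_k)\|_{\ell^p}+\|(\varepsilon_j)\|_{\ell^q}$. $\overline{\dim}_B$ is upper box dimension; $\log0=-\infty$. Adapted Cantor data of dimension at least $d'$: a compact self-similar set $K\subset\mathbb R^d$ satisfying the open set condition with $\dim_{\mathcal H}K=\dim_{\mathcal P}K\ge d'$, integers $t,N\ge1$, a nonzero real $a$, finite families $\Theta_n$ ($n\ge0$) of closed dyadic cubes of side $2^{-(t+Nn)}$ and injective maps $\mu$ from $\Theta_n$ to closed dyadic cubes of side $2^{-Nn}$, such that $K_n=\bigcup_{\lambda\in\Theta_n}\lambda$ is decreasing, $K=\bigcap_nK_n$, and for all $n$, $x\in K_n$, $\lambda\in\Theta_n$: $a\psi^{(1)}_{\mu(\lambda)}(x)\ge1$ if $x\in\lambda$ and $\psi^{(1)}_{\mu(\lambda)}(x)=0$ otherwise. (Such data exist for every $d'\in(0,d)$ when the wavelets are compactly supported.) *)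

theory Defs
  imports "HOL-Analysis.Analysis"
begin

section \<open>Basic notation on R^d = real^'n, d = CARD('n)\<close>

definition ivec :: "('n::finite \<Rightarrow> int) \<Rightarrow> real^'n" where
  "ivec k = (\<chi> m. real_of_int (k m))"

definition L2 :: "(real^'n::finite \<Rightarrow> real) set" where
  "L2 = {f. f \<in> borel_measurable lebesgue \<and> integrable lebesgue (\<lambda>x. (f x)^2)}"

definition l2_inner :: "(real^'n::finite \<Rightarrow> real) \<Rightarrow> (real^'n \<Rightarrow> real) \<Rightarrow> real" where
  "l2_inner f g = (LINT x|lebesgue. f x * g x)"

definition l2_norm :: "(real^'n::finite \<Rightarrow> real) \<Rightarrow> real" where
  "l2_norm f = sqrt (LINT x|lebesgue. (f x)^2)"

definition l2_closed_subspace :: "(real^'n::finite \<Rightarrow> real) set \<Rightarrow> bool" where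
  "l2_closed_subspace W \<longleftrightarrow> W \<subseteq> L2 \<and> (\<lambda>x. 0) \<in> W
     \<and> (\<forall>f\<in>W. \<forall>g\<in>W. (\<lambda>x. f x + g x) \<in> W)
     \<and> (\<forall>c. \<forall>f\<in>W. (\<lambda>x. c * f x) \<in> W)
     \<and> (\<forall>f\<in>L2. (\<forall>e>0. \<exists>g\<in>W. l2_norm (\<lambda>x. f x - g x) < e) \<longrightarrow> f \<in> W)"

definition l2_dense :: "(real^'n::finite \<Rightarrow> real) set \<Rightarrow> bool" where
  "l2_dense W \<longleftrightarrow> (\<forall>f\<in>L2. \<forall>e>0. \<exists>g\<in>W. l2_norm (\<lambda>x. f x - g x) < e)"

definition orthonormal_basis_of ::
  "(real^'n::finite \<Rightarrow> real) set \<Rightarrow> 'i set \<Rightarrow> ('i \<Rightarrow> real^'n \<Rightarrow> real) \<Rightarrow> bool" where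
  "orthonormal_basis_of W I e \<longleftrightarrow>
     (\<forall>i\<in>I. e i \<in> W)
     \<and> (\<forall>i\<in>I. \<forall>j\<in>I. l2_inner (e i) (e j) = (if i = j then 1 else 0))
     \<and> (\<forall>f\<in>W. \<forall>\<epsilon>>0. \<exists>F c. finite F \<and> F \<subseteq> I \<and>
            l2_norm (\<lambda>x. f x - (\<Sum>i\<in>F. c i * e i x)) < \<epsilon>)"

definition orth_mra :: "(int \<Rightarrow> (real^'n::finite \<Rightarrow> real) set) \<Rightarrow> (real^'n \<Rightarrow> real) \<Rightarrow> bool" where
  "orth_mra V \<phi> \<longleftrightarrow>
     (\<forall>j. l2_closed_subspace (V j))
     \<and> (\<forall>j. V j \<subseteq> V (j + 1))
     \<and> (\<forall>j f. f \<in> V j \<longleftrightarrow> (\<lambda>x. f (2 *\<^sub>R x)) \<in> V (j + 1))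
     \<and> (\<Inter>j. V j) = {f\<in>L2. AE x in lebesgue. f x = 0}
     \<and> l2_dense (\<Union>j. V j)
     \<and> orthonormal_basis_of (V 0) UNIV (\<lambda>k x. \<phi> (x - ivec k))"

definition mra_wavelets ::
  "(int \<Rightarrow> (real^'n::finite \<Rightarrow> real) set) \<Rightarrow> (nat \<Rightarrow> real^'n \<Rightarrow> real) \<Rightarrow> bool" where
  "mra_wavelets V \<psi> \<longleftrightarrow>
     orthonormal_basis_of {f\<in>V 1. \<forall>g\<in>V 0. l2_inner f g = 0}
        ({1..<2^CARD('n)} \<times> (UNIV :: ('n \<Rightarrow> int) set))
        (\<lambda>(i,k) x. \<psi> i (x - ivec k))
     \<and> orthonormal_basis_of L2
        ({1..<2^CARD('n)} \<times> (UNIV :: int set) \<times> (UNIV :: ('n \<Rightarrow> int) set))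
        (\<lambda>(i,j,k) x. 2 powr (real CARD('n) * real_of_int j / 2)
                       * \<psi> i (2 powr (real_of_int j) *\<^sub>R x - ivec k))"

fun Ck :: "nat \<Rightarrow> (real^'n::finite \<Rightarrow> real) \<Rightarrow> bool" where
  "Ck 0 f = continuous_on UNIV f"
| "Ck (Suc k) f = (continuous_on UNIV f \<and> (\<forall>x. f differentiable (at x))
      \<and> (\<forall>m. Ck k (\<lambda>x. frechet_derivative f (at x) (axis m 1))))"

definition compactly_supported :: "(real^'n::finite \<Rightarrow> real) \<Rightarrow> bool" where
  "compactly_supported f \<longleftrightarrow> bounded {x. f x \<noteq> 0}"

definition coefC :: "(real^'n::finite \<Rightarrow> real) \<Rightarrow> (real^'n \<Rightarrow> real) \<Rightarrow> ('n \<Rightarrow> int) \<Rightarrow> real" where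
  "coefC \<phi> f k = (LINT x|lebesgue. \<phi> (x - ivec k) * f x)"

definition coefc :: "(nat \<Rightarrow> real^'n::finite \<Rightarrow> real) \<Rightarrow> (real^'n \<Rightarrow> real)
                     \<Rightarrow> nat \<Rightarrow> nat \<Rightarrow> ('n \<Rightarrow> int) \<Rightarrow> real" where
  "coefc \<psi> f i j k = 2 ^ (CARD('n) * j) * (LINT x|lebesgue. \<psi> i (2 ^ j *\<^sub>R x - ivec k) * f x)"

definition Qproj :: "(nat \<Rightarrow> real^'n::finite \<Rightarrow> real) \<Rightarrow> (real^'n \<Rightarrow> real) \<Rightarrow> nat \<Rightarrow> real^'n \<Rightarrow> real" where
  "Qproj \<psi> f l x = (\<Sum>i\<in>{1..<2^CARD('n)}.
       \<Sum>\<^sub>\<infinity>k\<in>(UNIV :: ('n \<Rightarrow> int) set). coefc \<psi> f i l k * \<psi> i (2 ^ l *\<^sub>R x - ivec k))"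

definition Pproj :: "(real^'n::finite \<Rightarrow> real) \<Rightarrow> (nat \<Rightarrow> real^'n \<Rightarrow> real) \<Rightarrow> (real^'n \<Rightarrow> real)
                     \<Rightarrow> nat \<Rightarrow> real^'n \<Rightarrow> real" where
  "Pproj \<phi> \<psi> f j x = (\<Sum>\<^sub>\<infinity>k\<in>(UNIV :: ('n \<Rightarrow> int) set). coefC \<phi> f k * \<phi> (x - ivec k))
                       + (\<Sum>l<j. Qproj \<psi> f l x)"

definition besov_eps :: "(nat \<Rightarrow> real^'n::finite \<Rightarrow> real) \<Rightarrow> real \<Rightarrow> real \<Rightarrow> (real^'n \<Rightarrow> real)
                         \<Rightarrow> nat \<Rightarrow> real" where
  "besov_eps \<psi> s p f j = 2 powr ((s - real CARD('n) / p) * real j)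
      * (\<Sum>i\<in>{1..<2^CARD('n)}. \<Sum>\<^sub>\<infinity>k\<in>(UNIV :: ('n \<Rightarrow> int) set). \<bar>coefc \<psi> f i j k\<bar> powr p) powr (1 / p)"

definition besov :: "(real^'n::finite \<Rightarrow> real) \<Rightarrow> (nat \<Rightarrow> real^'n \<Rightarrow> real) \<Rightarrow> real \<Rightarrow> real \<Rightarrow> real
                     \<Rightarrow> (real^'n \<Rightarrow> real) \<Rightarrow> bool" where
  "besov \<phi> \<psi> s q p f \<longleftrightarrow>
     f \<in> borel_measurable lebesgue
     \<and> (\<forall>k. integrable lebesgue (\<lambda>x. \<phi> (x - ivec k) * f x))
     \<and> (\<forall>i\<in>{1..<2^CARD('n)}. \<forall>j::nat. \<forall>k.
           integrable lebesgue (\<lambda>x. \<psi> i (2 ^ j *\<^sub>R x - ivec k) * f x))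
     \<and> (\<lambda>k. \<bar>coefC \<phi> f k\<bar> powr p) summable_on UNIV
     \<and> (\<forall>i\<in>{1..<2^CARD('n)}. \<forall>j. (\<lambda>k. \<bar>coefc \<psi> f i j k\<bar> powr p) summable_on UNIV)
     \<and> summable (\<lambda>j. besov_eps \<psi> s p f j powr q)"

definition besov_norm :: "(real^'n::finite \<Rightarrow> real) \<Rightarrow> (nat \<Rightarrow> real^'n \<Rightarrow> real) \<Rightarrow> real \<Rightarrow> real \<Rightarrow> real
                     \<Rightarrow> (real^'n \<Rightarrow> real) \<Rightarrow> real" where
  "besov_norm \<phi> \<psi> s q p f =
     (\<Sum>\<^sub>\<infinity>k\<in>(UNIV :: ('n \<Rightarrow> int) set). \<bar>coefC \<phi> f k\<bar> powr p) powr (1 / p)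
     + (\<Sum>j. besov_eps \<psi> s p f j powr q) powr (1 / q)"

definition eln :: "ereal \<Rightarrow> ereal" where
  "eln y = (if y \<le> 0 then -\<infinity> else if y = \<infinity> then \<infinity> else ereal (ln (real_of_ereal y)))"

definition cover_number :: "real \<Rightarrow> 'a::metric_space set \<Rightarrow> ereal" where
  "cover_number \<delta> E = Inf {ereal (real (card F)) | F. finite F \<and> E \<subseteq> \<Union>F
       \<and> (\<forall>U\<in>F. bounded U \<and> diameter U \<le> \<delta>)}"

definition upper_box_dim :: "'a::metric_space set \<Rightarrow> ereal" where
  "upper_box_dim E = Limsup (at_right 0) (\<lambda>\<delta>. eln (cover_number \<delta> E) / ereal (- ln \<delta>))"

definition hausdorff_content :: "real \<Rightarrow> real \<Rightarrow> 'a::metric_space set \<Rightarrow> ennreal" where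
  "hausdorff_content s \<delta> E = (INF U \<in> {U :: nat \<Rightarrow> 'a set. E \<subseteq> (\<Union>i. U i)
        \<and> (\<forall>i. bounded (U i) \<and> diameter (U i) \<le> \<delta>)}.
        \<Sum>i. ennreal (diameter (U i) powr s))"

definition hausdorff_measure :: "real \<Rightarrow> 'a::metric_space set \<Rightarrow> ennreal" where
  "hausdorff_measure s E = (SUP \<delta>\<in>{0<..}. hausdorff_content s \<delta> E)"

definition hausdorff_dim :: "'a::metric_space set \<Rightarrow> real" where
  "hausdorff_dim E = Inf {s. 0 \<le> s \<and> hausdorff_measure s E = 0}"

text \<open>Packing premeasure: supremum over (finite, hence also countable) families of disjoint
  closed balls centred in E with radii at most delta.\<close>
definition packing_pre :: "real \<Rightarrow> real \<Rightarrow> 'a::metric_space set \<Rightarrow> ennreal" where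
  "packing_pre s \<delta> E = (SUP B \<in> {(I, c, r) | (I :: nat set) c r. finite I
        \<and> (\<forall>i\<in>I. c i \<in> E \<and> 0 < r i \<and> r i \<le> \<delta>)
        \<and> (\<forall>i\<in>I. \<forall>j\<in>I. i \<noteq> j \<longrightarrow> cball (c i) (r i) \<inter> cball (c j) (r j) = {})}.
        (case B of (I, c, r) \<Rightarrow> \<Sum>i\<in>I. ennreal ((2 * r i) powr s)))"

definition packing_pre0 :: "real \<Rightarrow> 'a::metric_space set \<Rightarrow> ennreal" where
  "packing_pre0 s E = (INF \<delta>\<in>{0<..}. packing_pre s \<delta> E)"

definition packing_measure :: "real \<Rightarrow> 'a::metric_space set \<Rightarrow> ennreal" where
  "packing_measure s E = (INF A \<in> {A :: nat \<Rightarrow> 'a set. E \<subseteq> (\<Union>i. A i)}.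
        \<Sum>i. packing_pre0 s (A i))"

definition packing_dim :: "'a::metric_space set \<Rightarrow> real" where
  "packing_dim E = Inf {s. 0 \<le> s \<and> packing_measure s E = 0}"

definition self_similar_osc :: "'a::metric_space set \<Rightarrow> bool" where
  "self_similar_osc K \<longleftrightarrow> compact K \<and> K \<noteq> {} \<and>
     (\<exists>(m::nat) r S. m \<ge> 1
        \<and> (\<forall>i<m. 0 < r i \<and> r i < 1 \<and> (\<forall>x y. dist (S i x) (S i y) = r i * dist x y))
        \<and> K = (\<Union>i<m. S i ` K)
        \<and> (\<exists>U. open U \<and> U \<noteq> {} \<and> (\<forall>i<m. S i ` U \<subseteq> U)
              \<and> (\<forall>i<m. \<forall>j<m. i \<noteq> j \<longrightarrow> S i ` U \<inter> S j ` U = {})))"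

definition closed_cube :: "nat \<times> ('n::finite \<Rightarrow> int) \<Rightarrow> (real^'n) set" where
  "closed_cube jk = (case jk of (j, k) \<Rightarrow>
     {x. \<forall>m. real_of_int (k m) / 2 ^ j \<le> x $ m \<and> x $ m \<le> (real_of_int (k m) + 1) / 2 ^ j})"

definition psi_cube :: "(nat \<Rightarrow> real^'n::finite \<Rightarrow> real) \<Rightarrow> nat \<times> ('n \<Rightarrow> int) \<Rightarrow> real^'n \<Rightarrow> real" where
  "psi_cube \<psi> jk x = (case jk of (j, k) \<Rightarrow> \<psi> 1 (2 ^ j *\<^sub>R x - ivec k))"

definition cantor_level :: "(nat \<Rightarrow> (nat \<times> ('n::finite \<Rightarrow> int)) set) \<Rightarrow> nat \<Rightarrow> (real^'n) set" where
  "cantor_level \<Theta> n = (\<Union>Q\<in>\<Theta> n. closed_cube Q)"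

definition adapted_cantor_data ::
  "(nat \<Rightarrow> real^'n::finite \<Rightarrow> real) \<Rightarrow> real \<Rightarrow> (real^'n) set \<Rightarrow> nat \<Rightarrow> nat \<Rightarrow> real
   \<Rightarrow> (nat \<Rightarrow> (nat \<times> ('n \<Rightarrow> int)) set)
   \<Rightarrow> (nat \<Rightarrow> nat \<times> ('n \<Rightarrow> int) \<Rightarrow> nat \<times> ('n \<Rightarrow> int)) \<Rightarrow> bool" where
  "adapted_cantor_data \<psi> d' K t N a \<Theta> \<mu> \<longleftrightarrow>
     self_similar_osc K
     \<and> hausdorff_dim K = packing_dim K \<and> hausdorff_dim K \<ge> d'
     \<and> t \<ge> 1 \<and> N \<ge> 1 \<and> a \<noteq> 0
     \<and> (\<forall>n. finite (\<Theta> n) \<and> (\<forall>Q\<in>\<Theta> n. fst Q = t + N * n))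
     \<and> (\<forall>n. inj_on (\<mu> n) (\<Theta> n) \<and> (\<forall>Q\<in>\<Theta> n. fst (\<mu> n Q) = N * n))
     \<and> (\<forall>n. cantor_level \<Theta> (Suc n) \<subseteq> cantor_level \<Theta> n)
     \<and> K = (\<Inter>n. cantor_level \<Theta> n)
     \<and> (\<forall>n. \<forall>x\<in>cantor_level \<Theta> n. \<forall>Q\<in>\<Theta> n.
           (x \<in> closed_cube Q \<longrightarrow> a * psi_cube \<psi> (\<mu> n Q) x \<ge> 1)
         \<and> (x \<notin> closed_cube Q \<longrightarrow> psi_cube \<psi> (\<mu> n Q) x = 0))"

end

theory Submission
  imports Defs
begin


lemma lebesgue_affine_const:
  fixes t :: "'a::euclidean_space" and c :: real
  assumes c: "c \<noteq> 0"
  shows "lebesgue = density (distr lebesgue lebesgue (\<lambda>x. t + c *\<^sub>R x)) (\<lambda>_. \<bar>c\<bar>^DIM('a))"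
    and "(\<lambda>x. t + c *\<^sub>R x) \<in> lebesgue \<rightarrow>\<^sub>M lebesgue"
proof -
  have T: "(\<lambda>x. t + (\<Sum>j\<in>Basis. (c * (x \<bullet> j)) *\<^sub>R j)) = (\<lambda>x::'a. t + c *\<^sub>R x)"
    unfolding scaleR_scaleR[symmetric] scaleR_sum_right[symmetric] euclidean_representation by simp
  show "lebesgue = density (distr lebesgue lebesgue (\<lambda>x. t + c *\<^sub>R x)) (\<lambda>_. \<bar>c\<bar>^DIM('a))"
    using lebesgue_affine_euclidean[where c="\<lambda>_::'a. c" and t=t] c unfolding T by (simp add: prod_constant)
  show "(\<lambda>x. t + c *\<^sub>R x) \<in> lebesgue \<rightarrow>\<^sub>M lebesgue"
    using lebesgue_affine_measurable[where c="\<lambda>_::'a. c" and t=t] c unfolding T by simp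
qed

lemma lebesgue_integrable_affine:
  fixes f :: "'a::euclidean_space \<Rightarrow> real" and c :: real
  assumes f: "integrable lebesgue f" and c: "c \<noteq> 0"
  shows "integrable lebesgue (\<lambda>x. f (t + c *\<^sub>R x))"
proof -
  note m = lebesgue_affine_const(2)[OF c, of t]
  have "integrable (density (distr lebesgue lebesgue (\<lambda>x. t + c *\<^sub>R x)) (\<lambda>_. \<bar>c\<bar>^DIM('a))) f"
    using f lebesgue_affine_const(1)[OF c, of t] by simp
  then have "integrable (distr lebesgue lebesgue (\<lambda>x. t + c *\<^sub>R x)) (\<lambda>x. \<bar>c\<bar>^DIM('a) *\<^sub>R f x)"
    by (subst (asm) integrable_density) (use f c in auto)
  then have "integrable lebesgue (\<lambda>x. \<bar>c\<bar>^DIM('a) *\<^sub>R f (t + c *\<^sub>R x))"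
    by (subst (asm) integrable_distr_eq) (use m f in auto)
  then show ?thesis using c by simp
qed

lemma lebesgue_integrable_affine_iff:
  fixes f :: "'a::euclidean_space \<Rightarrow> real" and c :: real
  assumes c: "c \<noteq> 0"
  shows "integrable lebesgue (\<lambda>x. f (t + c *\<^sub>R x)) \<longleftrightarrow> integrable lebesgue f"
  using lebesgue_integrable_affine[of f c t] lebesgue_integrable_affine[of "\<lambda>x. f (t + c *\<^sub>R x)" "1/c" "-t/\<^sub>R c"] c
  by (auto simp: algebra_simps)

lemma lebesgue_integral_affine:
  fixes f :: "'a::euclidean_space \<Rightarrow> real" and c :: real
  assumes c: "c \<noteq> 0"
  shows "(LINT x|lebesgue. f x) = \<bar>c\<bar>^DIM('a) * (LINT x|lebesgue. f (t + c *\<^sub>R x))"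
proof cases
  assume f: "integrable lebesgue f"
  note m = lebesgue_affine_const(2)[OF c, of t]
  show ?thesis
    by (subst lebesgue_affine_const(1)[OF c, of t]) (use f m in \<open>auto simp: integral_density integral_distr\<close>)
next
  assume "\<not> integrable lebesgue f" with c show ?thesis
    by (simp add: lebesgue_integrable_affine_iff not_integrable_integral_eq)
qed


definition ccs :: "(real^'n::finite \<Rightarrow> real) \<Rightarrow> bool" where
  "ccs g \<longleftrightarrow> continuous_on UNIV g \<and> compactly_supported g"

lemma ccs_support': assumes "ccs g" shows "\<exists>B>0. \<forall>x. g x \<noteq> 0 \<longrightarrow> norm x \<le> B"
proof -
  from assms obtain B where "\<forall>x\<in>{x. g x \<noteq> 0}. norm x \<le> B"
    unfolding ccs_def compactly_supported_def bounded_iff by blast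
  then show ?thesis by (intro exI[of _ "max B 1"]) fastforce
qed

lemma ccs_bounded: assumes "ccs g" obtains C where "\<And>x. \<bar>g x\<bar> \<le> C"
proof -
  obtain B where B: "B > 0" "\<And>x. g x \<noteq> 0 \<Longrightarrow> norm x \<le> B" using ccs_support'[OF assms] by blast
  have "compact (g ` cball 0 B)"
    using assms unfolding ccs_def by (intro compact_continuous_image) (auto intro: continuous_on_subset)
  then obtain C where C: "\<And>y. y \<in> g ` cball 0 B \<Longrightarrow> norm y \<le> C"
    using compact_imp_bounded[OF \<open>compact (g ` cball 0 B)\<close>] unfolding bounded_iff by blast
  show ?thesis
  proof (rule that[of "max C 0"])
    fix x show "\<bar>g x\<bar> \<le> max C 0"
      using C[of "g x"] B(2)[of x] by (cases "g x = 0") auto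
  qed
qed

lemma ccs_measurable: "ccs g \<Longrightarrow> g \<in> borel_measurable lebesgue"
  unfolding ccs_def by (rule measurable_completion) (simp add: borel_measurable_continuous_onI)

lemma ccs_integrable: assumes "ccs g" shows "integrable lebesgue g"
proof -
  obtain B where B: "B > 0" "\<And>x. g x \<noteq> 0 \<Longrightarrow> norm x \<le> B" using ccs_support'[OF assms] by blast
  have "integrable lborel (\<lambda>x. indicator (cball 0 B) x *\<^sub>R g x)"
    using assms unfolding ccs_def by (intro borel_integrable_compact) (auto intro: continuous_on_subset)
  moreover have "(\<lambda>x. indicator (cball 0 B) x *\<^sub>R g x) = g"
    using B(2) by (auto simp: indicator_def fun_eq_iff)
  ultimately have "integrable lborel g" by simp
  moreover have "g \<in> borel_measurable borel"
    using assms unfolding ccs_def by (simp add: borel_measurable_continuous_onI)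
  ultimately show ?thesis by (simp add: integrable_completion)
qed

lemma ccs_mult: assumes "ccs f" "ccs g" shows "ccs (\<lambda>x. f x * g x)"
proof -
  have "continuous_on UNIV (\<lambda>x. f x * g x)"
    using assms unfolding ccs_def by (intro continuous_on_mult) auto
  moreover have "bounded {x. f x * g x \<noteq> 0}"
    by (rule bounded_subset[of "{x. f x \<noteq> 0}"]) (use assms in \<open>auto simp: ccs_def compactly_supported_def\<close>)
  ultimately show ?thesis by (simp add: ccs_def compactly_supported_def)
qed

lemma ccs_cmult: assumes "ccs g" shows "ccs (\<lambda>x. c * g x)"
proof -
  have "continuous_on UNIV (\<lambda>x. c * g x)"
    using assms unfolding ccs_def by (intro continuous_on_mult continuous_on_const) auto
  moreover have "bounded {x. c * g x \<noteq> 0}"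
    by (rule bounded_subset[of "{x. g x \<noteq> 0}"]) (use assms in \<open>auto simp: ccs_def compactly_supported_def\<close>)
  ultimately show ?thesis by (simp add: ccs_def compactly_supported_def)
qed

lemma ccs_zero: "ccs (\<lambda>x. 0)"
  unfolding ccs_def compactly_supported_def by auto

lemma ccs_add: assumes "ccs f" "ccs g" shows "ccs (\<lambda>x. f x + g x)"
proof -
  have "continuous_on UNIV (\<lambda>x. f x + g x)"
    using assms unfolding ccs_def by (intro continuous_on_add) auto
  moreover have "bounded {x. f x + g x \<noteq> 0}"
    by (rule bounded_subset[of "{x. f x \<noteq> 0} \<union> {x. g x \<noteq> 0}"]) (use assms in \<open>auto simp: ccs_def compactly_supported_def\<close>)
  ultimately show ?thesis by (simp add: ccs_def compactly_supported_def)
qed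

lemma ccs_sum: "finite A \<Longrightarrow> (\<And>a. a \<in> A \<Longrightarrow> ccs (F a)) \<Longrightarrow> ccs (\<lambda>x. \<Sum>a\<in>A. F a x)"
proof (induction A rule: finite_induct)
  case empty then show ?case by (simp add: ccs_zero)
next
  case (insert a A)
  then have "ccs (\<lambda>x. F a x + (\<Sum>a\<in>A. F a x))" by (intro ccs_add) auto
  then show ?case using insert by simp
qed

lemma ccs_affine: assumes "ccs g" "c \<noteq> 0" shows "ccs (\<lambda>x. g (c *\<^sub>R x - v))"
proof -
  obtain B where B: "B > 0" "\<And>x. g x \<noteq> 0 \<Longrightarrow> norm x \<le> B" using ccs_support'[OF assms(1)] by blast
  have "norm x \<le> (B + norm v) / \<bar>c\<bar>" if "g (c *\<^sub>R x - v) \<noteq> 0" for x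
  proof -
    have "norm (c *\<^sub>R x - v) \<le> B" using B(2) that by blast
    moreover have "norm (c *\<^sub>R x) - norm v \<le> norm (c *\<^sub>R x - v)" by (rule norm_triangle_ineq2)
    ultimately have "\<bar>c\<bar> * norm x \<le> B + norm v" by simp
    then show ?thesis using assms(2) by (simp add: pos_le_divide_eq mult.commute)
  qed
  then have "bounded {x. g (c *\<^sub>R x - v) \<noteq> 0}" unfolding bounded_iff by blast
  moreover have "continuous_on UNIV (\<lambda>x. g (c *\<^sub>R x - v))"
  proof -
    have "continuous_on UNIV (\<lambda>x::real^'a. c *\<^sub>R x - v)" by (intro continuous_on_diff continuous_on_scaleR continuous_on_id continuous_on_const)
    moreover have "continuous_on (range (\<lambda>x::real^'a. c *\<^sub>R x - v)) g"
      using assms(1) unfolding ccs_def by (rule continuous_on_subset[OF conjunct1]) simp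
    ultimately show ?thesis using continuous_on_compose[of UNIV "\<lambda>x::real^'a. c *\<^sub>R x - v" g] by (simp add: o_def)
  qed
  ultimately show ?thesis unfolding ccs_def compactly_supported_def by simp
qed

lemma Ck_cont: "Ck k f \<Longrightarrow> continuous_on UNIV f"
  by (cases k) auto




locale wavsetup =
  fixes V :: "int \<Rightarrow> (real^'n::finite \<Rightarrow> real) set" and \<phi> :: "real^'n \<Rightarrow> real"
    and \<psi> :: "nat \<Rightarrow> real^'n \<Rightarrow> real"
  assumes mra: "orth_mra V \<phi>" and wav: "mra_wavelets V \<psi>"
    and ccs_phi: "ccs \<phi>" and ccs_psi: "\<And>i. i \<in> {1..<2^CARD('n)} \<Longrightarrow> ccs (\<psi> i)"
begin

lemma psi_inner:
  assumes i: "i \<in> {1..<2^CARD('n)}" and i': "i' \<in> {1..<2^CARD('n)}"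
  shows "(LINT x|lebesgue. \<psi> i (2 ^ j *\<^sub>R x - ivec k) * \<psi> i' (2 ^ j' *\<^sub>R x - ivec k'))
         = (if i = i' \<and> j = j' \<and> k = k' then 1 / 2 ^ (CARD('n) * j) else 0)"
proof -
  define A where "A = (\<lambda>j::nat. 2 powr (real CARD('n) * real j / 2))"
  have Apos: "A j > 0" for j unfolding A_def by simp
  have AA: "A j * A j = 2 ^ (CARD('n) * j)"
    unfolding A_def by (simp add: powr_add[symmetric] powr_realpow[symmetric] mult.commute)
  from wav have "orthonormal_basis_of L2
        ({1..<2^CARD('n)} \<times> (UNIV :: int set) \<times> (UNIV :: ('n \<Rightarrow> int) set))
        (\<lambda>(i,j,k) x. 2 powr (real CARD('n) * real_of_int j / 2)
                       * \<psi> i (2 powr (real_of_int j) *\<^sub>R x - ivec k))"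
    unfolding mra_wavelets_def by blast
  then have "l2_inner (\<lambda>x. A j * \<psi> i (2 ^ j *\<^sub>R x - ivec k)) (\<lambda>x. A j' * \<psi> i' (2 ^ j' *\<^sub>R x - ivec k'))
     = (if (i, int j, k) = (i', int j', k') then 1 else 0)"
  proof -
    assume ob: "orthonormal_basis_of L2
        ({1..<2^CARD('n)} \<times> (UNIV :: int set) \<times> (UNIV :: ('n \<Rightarrow> int) set))
        (\<lambda>(i,j,k) x. 2 powr (real CARD('n) * real_of_int j / 2)
                       * \<psi> i (2 powr (real_of_int j) *\<^sub>R x - ivec k))"
    have "\<forall>a\<in>{1..<2^CARD('n)} \<times> (UNIV :: int set) \<times> (UNIV :: ('n \<Rightarrow> int) set).
          \<forall>b\<in>{1..<2^CARD('n)} \<times> (UNIV :: int set) \<times> (UNIV :: ('n \<Rightarrow> int) set).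
          l2_inner ((\<lambda>(i,j,k) x. 2 powr (real CARD('n) * real_of_int j / 2)
                       * \<psi> i (2 powr (real_of_int j) *\<^sub>R x - ivec k)) a)
                   ((\<lambda>(i,j,k) x. 2 powr (real CARD('n) * real_of_int j / 2)
                       * \<psi> i (2 powr (real_of_int j) *\<^sub>R x - ivec k)) b) = (if a = b then 1 else 0)"
      using ob unfolding orthonormal_basis_of_def by blast
    from this[rule_format, of "(i, int j, k)" "(i', int j', k')"] i i'
    show ?thesis by (simp add: A_def powr_realpow)
  qed
  moreover have "l2_inner (\<lambda>x. A j * \<psi> i (2 ^ j *\<^sub>R x - ivec k)) (\<lambda>x. A j' * \<psi> i' (2 ^ j' *\<^sub>R x - ivec k'))
     = A j * A j' * (LINT x|lebesgue. \<psi> i (2 ^ j *\<^sub>R x - ivec k) * \<psi> i' (2 ^ j' *\<^sub>R x - ivec k'))"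
    unfolding l2_inner_def by (simp add: ac_simps)
  ultimately have E: "A j * A j' * (LINT x|lebesgue. \<psi> i (2 ^ j *\<^sub>R x - ivec k) * \<psi> i' (2 ^ j' *\<^sub>R x - ivec k'))
     = (if (i, int j, k) = (i', int j', k') then 1 else 0)" by simp
  show ?thesis
  proof (cases "i = i' \<and> j = j' \<and> k = k'")
    case True
    then have "(A j * A j) * (LINT x|lebesgue. \<psi> i (2 ^ j *\<^sub>R x - ivec k) * \<psi> i' (2 ^ j' *\<^sub>R x - ivec k')) = 1"
      using E by (simp add: mult.assoc)
    then have "2 ^ (CARD('n) * j) * (LINT x|lebesgue. \<psi> i (2 ^ j *\<^sub>R x - ivec k) * \<psi> i' (2 ^ j' *\<^sub>R x - ivec k')) = 1"
      unfolding AA .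
    then show ?thesis using True by (simp add: field_simps)
  next
    case False
    then have "(i, int j, k) \<noteq> (i', int j', k')" by auto
    then show ?thesis using E Apos[of j] Apos[of j'] False by simp
  qed
qed

lemma phi_V0: "(\<lambda>x. \<phi> (x - ivec k)) \<in> V 0"
  using mra unfolding orth_mra_def orthonormal_basis_of_def by blast

lemma psi_W0: assumes "i \<in> {1..<2^CARD('n)}"
  shows "(\<lambda>x. \<psi> i (x - ivec k)) \<in> V 1" "\<And>g. g \<in> V 0 \<Longrightarrow> l2_inner (\<lambda>x. \<psi> i (x - ivec k)) g = 0"
proof -
  from wav have "orthonormal_basis_of {f\<in>V 1. \<forall>g\<in>V 0. l2_inner f g = 0}
        ({1..<2^CARD('n)} \<times> (UNIV :: ('n \<Rightarrow> int) set))
        (\<lambda>(i,k) x. \<psi> i (x - ivec k))" unfolding mra_wavelets_def by blast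
  then have "(\<lambda>x. \<psi> i (x - ivec k)) \<in> {f\<in>V 1. \<forall>g\<in>V 0. l2_inner f g = 0}"
    unfolding orthonormal_basis_of_def using assms by fastforce
  then show "(\<lambda>x. \<psi> i (x - ivec k)) \<in> V 1" "\<And>g. g \<in> V 0 \<Longrightarrow> l2_inner (\<lambda>x. \<psi> i (x - ivec k)) g = 0"
    by auto
qed

lemma V0_dilate: assumes "g \<in> V 0" shows "(\<lambda>x. g ((1/2)^l *\<^sub>R x)) \<in> V 0"
proof (induction l)
  case 0 then show ?case using assms by simp
next
  case (Suc l)
  define f where "f = (\<lambda>x. g ((1/2)^(Suc l) *\<^sub>R x))"
  have scal: "\<forall>j f. f \<in> V j \<longleftrightarrow> (\<lambda>x. f (2 *\<^sub>R x)) \<in> V (j + 1)" and mono: "\<forall>j. V j \<subseteq> V (j + 1)"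
    using mra unfolding orth_mra_def by blast+
  have "(\<lambda>x. f (2 *\<^sub>R x)) = (\<lambda>x. g ((1/2)^l *\<^sub>R x))"
    unfolding f_def by (simp add: scaleR_scaleR)
  then have "(\<lambda>x. f (2 *\<^sub>R x)) \<in> V (-1 + 1)" using Suc by simp
  then have "f \<in> V (-1)" using scal by blast
  then have "f \<in> V 0" using mono[rule_format, of "-1"] by auto
  then show ?case unfolding f_def .
qed

lemma V0_perp_psi:
  assumes g: "g \<in> V 0" and i: "i \<in> {1..<2^CARD('n)}"
  shows "(LINT x|lebesgue. g x * \<psi> i (2 ^ l *\<^sub>R x - ivec k)) = 0"
proof -
  define F where "F = (\<lambda>y. \<psi> i (y - ivec k) * g ((1/2)^l *\<^sub>R y))"
  have "l2_inner (\<lambda>x. \<psi> i (x - ivec k)) (\<lambda>x. g ((1/2)^l *\<^sub>R x)) = 0"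
    using psi_W0(2)[OF i V0_dilate[OF g]] .
  then have "(LINT y|lebesgue. F y) = 0" unfolding l2_inner_def F_def .
  moreover have "(LINT y|lebesgue. F y) = \<bar>(2::real)^l\<bar>^DIM(real^'n) * (LINT x|lebesgue. F (0 + (2^l) *\<^sub>R x))"
    by (rule lebesgue_integral_affine) simp
  moreover have "(\<lambda>x. F (0 + (2^l) *\<^sub>R x)) = (\<lambda>x. g x * \<psi> i (2 ^ l *\<^sub>R x - ivec k))"
    unfolding F_def by (auto simp: scaleR_scaleR power_mult_distrib[symmetric] fun_eq_iff)
  ultimately show ?thesis by simp
qed

lemma phi_perp_psi:
  assumes i: "i \<in> {1..<2^CARD('n)}"
  shows "(LINT x|lebesgue. \<phi> (x - ivec k') * \<psi> i (2 ^ l *\<^sub>R x - ivec k)) = 0"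
  using V0_perp_psi[OF phi_V0 i] .

end



lemma AE_summable_of_integrals:
  fixes T :: "nat \<Rightarrow> 'a \<Rightarrow> real"
  assumes int: "\<And>n. integrable M (T n)" and sm: "summable (\<lambda>n. LINT x|M. \<bar>T n x\<bar>)"
  shows "AE x in M. summable (\<lambda>n. \<bar>T n x\<bar>)"
proof -
  have meas: "\<And>n. (\<lambda>x. ennreal \<bar>T n x\<bar>) \<in> borel_measurable M"
    using int by (intro measurable_compose[OF _ measurable_ennreal]) (auto intro: borel_measurable_integrable)
  have "(\<integral>\<^sup>+ x. (\<Sum>n. ennreal \<bar>T n x\<bar>) \<partial>M) = (\<Sum>n. \<integral>\<^sup>+ x. ennreal \<bar>T n x\<bar> \<partial>M)"
    by (rule nn_integral_suminf[OF meas])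
  also have "\<dots> = (\<Sum>n. ennreal (LINT x|M. \<bar>T n x\<bar>))"
    using int by (intro arg_cong[where f=suminf] ext nn_integral_eq_integral) auto
  also have "\<dots> \<noteq> \<infinity>"
    unfolding infinity_ennreal_def by (rule ennreal_suminf_neq_top[OF sm]) (rule abs_ge_zero[THEN integral_nonneg_AE[OF AE_I2]])
  finally have "AE x in M. (\<Sum>n. ennreal \<bar>T n x\<bar>) \<noteq> \<infinity>"
    by (intro nn_integral_noteq_infinite) (use meas in auto)
  then show ?thesis
    by eventually_elim (auto intro: summable_suminf_not_top)
qed

lemma one_in_I: "(1::nat) \<in> {1..<2^CARD('n::finite)}"
proof -
  have "(2::nat) ^ 1 \<le> 2 ^ CARD('n)" by (rule power_increasing) auto
  then show ?thesis by auto
qed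

locale constr = wavsetup V \<phi> \<psi>
  for V :: "int \<Rightarrow> (real^'n::finite \<Rightarrow> real) set" and \<phi> \<psi> +
  fixes S :: "nat \<Rightarrow> (nat \<times> ('n \<Rightarrow> int)) set"
    and \<mu> :: "nat \<Rightarrow> nat \<times> ('n \<Rightarrow> int) \<Rightarrow> nat \<times> ('n \<Rightarrow> int)"
    and N :: nat and b :: "nat \<Rightarrow> real" and \<sigma> :: real
  assumes S_fin: "\<And>n. finite (S n)" and inj: "\<And>n. inj_on (\<mu> n) (S n)"
    and lev: "\<And>n Q. Q \<in> S n \<Longrightarrow> fst (\<mu> n Q) = N * n"
    and N1: "N \<ge> 1" and bnn: "\<And>n. b n \<ge> 0" and sig: "\<bar>\<sigma>\<bar> = 1"
    and summ: "summable (\<lambda>n. b n * real (card (S n)) / 2 ^ (CARD('n) * (N * n)))"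
begin

definition H where "H n x = \<sigma> * b n * (\<Sum>Q\<in>S n. psi_cube \<psi> (\<mu> n Q) x)"
definition F where "F x = (\<Sum>n. H n x)"

lemma ccs_psi1: "ccs (\<psi> 1)" using ccs_psi[OF one_in_I] .

lemma ccs_cube: "ccs (psi_cube \<psi> Q)"
proof -
  obtain l k where Q: "Q = (l, k)" by (cases Q)
  have "ccs (\<lambda>x. \<psi> 1 ((2::real) ^ l *\<^sub>R x - ivec k))"
    by (rule ccs_affine[OF ccs_psi1]) simp
  moreover have "psi_cube \<psi> Q = (\<lambda>x. \<psi> 1 ((2::real) ^ l *\<^sub>R x - ivec k))"
    unfolding Q psi_cube_def by (simp add: fun_eq_iff)
  ultimately show ?thesis by simp
qed

lemma ccs_H: "ccs (H n)"
proof -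
  have "ccs (\<lambda>x. (\<sigma> * b n) * (\<Sum>Q\<in>S n. psi_cube \<psi> (\<mu> n Q) x))"
    by (intro ccs_cmult ccs_sum S_fin ccs_cube)
  then show ?thesis unfolding H_def[abs_def] by simp
qed

definition Ipsi where "Ipsi = (LINT x|lebesgue. \<bar>\<psi> 1 x\<bar>)"

lemma int_abs_cube: "(LINT x|lebesgue. \<bar>psi_cube \<psi> (l, k) x\<bar>) = Ipsi / 2 ^ (CARD('n) * l)"
proof -
  define G where "G = (\<lambda>y. \<bar>\<psi> 1 (y - ivec k)\<bar>)"
  have "Ipsi = \<bar>1::real\<bar> ^ DIM(real^'n) * (LINT y|lebesgue. \<bar>\<psi> 1 (- ivec k + 1 *\<^sub>R y)\<bar>)"
    unfolding Ipsi_def by (rule lebesgue_integral_affine) simp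
  then have 1: "Ipsi = (LINT y|lebesgue. G y)" unfolding G_def by simp
  have "(LINT y|lebesgue. G y) = \<bar>(2::real)^l\<bar>^DIM(real^'n) * (LINT x|lebesgue. G (0 + (2^l) *\<^sub>R x))"
    by (rule lebesgue_integral_affine) simp
  moreover have "(\<lambda>x. G (0 + (2^l) *\<^sub>R x)) = (\<lambda>x. \<bar>psi_cube \<psi> (l, k) x\<bar>)"
    unfolding G_def psi_cube_def by (simp add: fun_eq_iff)
  ultimately show ?thesis using 1 by (simp add: power_mult field_simps)
qed

lemma int_abs_H: "(LINT x|lebesgue. \<bar>H n x\<bar>) \<le> b n * real (card (S n)) * Ipsi / 2 ^ (CARD('n) * (N * n))"
proof -
  have "(LINT x|lebesgue. \<bar>H n x\<bar>) \<le> (LINT x|lebesgue. b n * (\<Sum>Q\<in>S n. \<bar>psi_cube \<psi> (\<mu> n Q) x\<bar>))"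
  proof (rule integral_mono)
    show "integrable lebesgue (\<lambda>x. \<bar>H n x\<bar>)" using ccs_integrable[OF ccs_H] by simp
    show "integrable lebesgue (\<lambda>x. b n * (\<Sum>Q\<in>S n. \<bar>psi_cube \<psi> (\<mu> n Q) x\<bar>))"
      using ccs_integrable[OF ccs_cube] by (intro integrable_mult_right integrable_sum) auto
    fix x
    have "\<bar>H n x\<bar> = b n * \<bar>\<Sum>Q\<in>S n. psi_cube \<psi> (\<mu> n Q) x\<bar>"
      unfolding H_def using sig bnn[of n] by (simp add: abs_mult)
    also have "\<dots> \<le> b n * (\<Sum>Q\<in>S n. \<bar>psi_cube \<psi> (\<mu> n Q) x\<bar>)"
      using bnn[of n] by (intro mult_left_mono sum_abs) auto
    finally show "\<bar>H n x\<bar> \<le> b n * (\<Sum>Q\<in>S n. \<bar>psi_cube \<psi> (\<mu> n Q) x\<bar>)" .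
  qed
  also have "\<dots> = b n * (LINT x|lebesgue. (\<Sum>Q\<in>S n. \<bar>psi_cube \<psi> (\<mu> n Q) x\<bar>))"
    by simp
  also have "\<dots> = b n * (\<Sum>Q\<in>S n. (LINT x|lebesgue. \<bar>psi_cube \<psi> (\<mu> n Q) x\<bar>))"
  proof -
    have ii: "\<And>Q. integrable lebesgue (\<lambda>x. \<bar>psi_cube \<psi> (\<mu> n Q) x\<bar>)"
      by (rule integrable_abs[OF ccs_integrable[OF ccs_cube]])
    have "(LINT x|lebesgue. (\<Sum>Q\<in>S n. \<bar>psi_cube \<psi> (\<mu> n Q) x\<bar>)) = (\<Sum>Q\<in>S n. (LINT x|lebesgue. \<bar>psi_cube \<psi> (\<mu> n Q) x\<bar>))"
      by (rule Bochner_Integration.integral_sum) (rule ii)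
    then show ?thesis by simp
  qed
  also have "\<dots> = b n * (\<Sum>Q\<in>S n. Ipsi / 2 ^ (CARD('n) * (N * n)))"
  proof -
    have "(LINT x|lebesgue. \<bar>psi_cube \<psi> (\<mu> n Q) x\<bar>) = Ipsi / 2 ^ (CARD('n) * (N * n))" if "Q \<in> S n" for Q
      using int_abs_cube[of "fst (\<mu> n Q)" "snd (\<mu> n Q)"] lev[OF that] by (metis prod.collapse)
    then show ?thesis by simp
  qed
  also have "\<dots> = b n * real (card (S n)) * Ipsi / 2 ^ (CARD('n) * (N * n))" by simp
  finally show ?thesis .
qed

lemma test_integral:
  assumes g: "ccs g"
  shows "integrable lebesgue (\<lambda>x. g x * F x)"
    and "(LINT x|lebesgue. g x * F x) = (\<Sum>n. LINT x|lebesgue. g x * H n x)"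
proof -
  obtain C where C: "\<And>x. \<bar>g x\<bar> \<le> C" using ccs_bounded[OF g] by blast
  have C0: "C \<ge> 0" using C[of 0] by simp
  have intT: "integrable lebesgue (\<lambda>x. g x * H n x)" for n
    by (rule ccs_integrable[OF ccs_mult[OF g ccs_H]])
  have Ipsi0: "Ipsi \<ge> 0" unfolding Ipsi_def by simp
  have bound: "(LINT x|lebesgue. \<bar>g x * H n x\<bar>) \<le> C * Ipsi * (b n * real (card (S n)) / 2 ^ (CARD('n) * (N * n)))" for n
  proof -
    have "(LINT x|lebesgue. \<bar>g x * H n x\<bar>) \<le> (LINT x|lebesgue. C * \<bar>H n x\<bar>)"
    proof (rule integral_mono)
      show "integrable lebesgue (\<lambda>x. \<bar>g x * H n x\<bar>)" using intT[of n] by (rule integrable_abs)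
      show "integrable lebesgue (\<lambda>x. C * \<bar>H n x\<bar>)" using integrable_abs[OF ccs_integrable[OF ccs_H, of n]] by simp
      fix x show "\<bar>g x * H n x\<bar> \<le> C * \<bar>H n x\<bar>" unfolding abs_mult using C[of x] by (intro mult_right_mono) auto
    qed
    also have "\<dots> = C * (LINT x|lebesgue. \<bar>H n x\<bar>)" by simp
    also have "\<dots> \<le> C * (b n * real (card (S n)) * Ipsi / 2 ^ (CARD('n) * (N * n)))"
      using int_abs_H[of n] C0 by (intro mult_left_mono) auto
    finally show ?thesis by (simp add: field_simps)
  qed
  have sm: "summable (\<lambda>n. LINT x|lebesgue. \<bar>g x * H n x\<bar>)"
  proof (rule summable_comparison_test[OF _ summable_mult[OF summ, of "C * Ipsi"]])
    show "\<exists>M. \<forall>n\<ge>M. norm (LINT x|lebesgue. \<bar>g x * H n x\<bar>) \<le> C * Ipsi * (b n * real (card (S n)) / 2 ^ (CARD('n) * (N * n)))"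
      using bound by (intro exI[of _ 0]) (auto simp: integral_nonneg_AE)
  qed
  have AEs: "AE x in lebesgue. summable (\<lambda>n. \<bar>g x * H n x\<bar>)"
    by (rule AE_summable_of_integrals[OF intT sm])
  have measF: "F \<in> borel_measurable lebesgue"
    unfolding F_def[abs_def] using ccs_measurable[OF ccs_H] by (intro borel_measurable_suminf) auto
  have eq: "AE x in lebesgue. g x * F x = (\<Sum>n. g x * H n x)"
    using AEs
  proof eventually_elim
    fix x assume s: "summable (\<lambda>n. \<bar>g x * H n x\<bar>)"
    show "g x * F x = (\<Sum>n. g x * H n x)"
    proof (cases "g x = 0")
      case True then show ?thesis by simp
    next
      case False
      have "summable (\<lambda>n. g x * H n x)" using s by (rule summable_rabs_cancel)
      then have "summable (\<lambda>n. H n x)" using False by (simp add: summable_cmult_iff)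
      then show ?thesis unfolding F_def by (simp add: suminf_mult)
    qed
  qed
  have meas1: "(\<lambda>x. g x * F x) \<in> borel_measurable lebesgue"
    using ccs_measurable[OF g] measF by measurable
  have meas2: "(\<lambda>x. \<Sum>n. g x * H n x) \<in> borel_measurable lebesgue"
    using intT by (intro borel_measurable_suminf) auto
  have i2: "integrable lebesgue (\<lambda>x. \<Sum>n. g x * H n x)"
    using integrable_suminf[of lebesgue "\<lambda>n x. g x * H n x"] intT AEs sm by simp
  show "integrable lebesgue (\<lambda>x. g x * F x)"
    using integrable_cong_AE[OF meas1 meas2 eq] i2 by simp
  have "(LINT x|lebesgue. g x * F x) = (LINT x|lebesgue. (\<Sum>n. g x * H n x))"
    by (rule integral_cong_AE[OF meas1 meas2 eq])
  also have "\<dots> = (\<Sum>n. LINT x|lebesgue. g x * H n x)"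
    using integral_suminf[of lebesgue "\<lambda>n x. g x * H n x"] intT AEs sm by simp
  finally show "(LINT x|lebesgue. g x * F x) = (\<Sum>n. LINT x|lebesgue. g x * H n x)" .
qed

end



lemma infsum_fin_supp:
  fixes f :: "'a \<Rightarrow> real"
  assumes "finite A" "\<And>x. x \<notin> A \<Longrightarrow> f x = 0"
  shows "infsum f UNIV = sum f A" "f summable_on UNIV"
proof -
  have "infsum f UNIV = infsum f A"
    by (rule infsum_cong_neutral) (use assms in auto)
  then show "infsum f UNIV = sum f A" using assms by simp
  have "f summable_on UNIV \<longleftrightarrow> f summable_on A"
    by (rule summable_on_cong_neutral) (use assms in auto)
  then show "f summable_on UNIV" using assms by simp
qed

context constr
begin

definition T where "T n = \<mu> n ` S n"

definition cf where "cf i j k = (if i = (1::nat) \<and> (j, k) \<in> T (j div N) then \<sigma> * b (j div N) else 0)"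

lemma T_fin: "finite (T n)" unfolding T_def using S_fin by simp

lemma T_lev: "P \<in> T n \<Longrightarrow> fst P = N * n" unfolding T_def using lev by auto

lemma card_T: "card (T n) = card (S n)" unfolding T_def using inj by (simp add: card_image)

lemma integral_gH:
  assumes g: "ccs g"
  shows "(LINT x|lebesgue. g x * H n x) = \<sigma> * b n * (\<Sum>Q\<in>S n. LINT x|lebesgue. g x * psi_cube \<psi> (\<mu> n Q) x)"
proof -
  have ii: "\<And>Q. integrable lebesgue (\<lambda>x. g x * psi_cube \<psi> (\<mu> n Q) x)"
    by (rule ccs_integrable[OF ccs_mult[OF g ccs_cube]])
  have "(LINT x|lebesgue. g x * H n x) = (LINT x|lebesgue. \<sigma> * b n * (\<Sum>Q\<in>S n. g x * psi_cube \<psi> (\<mu> n Q) x))"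
    unfolding H_def by (simp add: sum_distrib_left ac_simps)
  also have "\<dots> = \<sigma> * b n * (LINT x|lebesgue. (\<Sum>Q\<in>S n. g x * psi_cube \<psi> (\<mu> n Q) x))"
    by simp
  also have "(LINT x|lebesgue. (\<Sum>Q\<in>S n. g x * psi_cube \<psi> (\<mu> n Q) x)) = (\<Sum>Q\<in>S n. LINT x|lebesgue. g x * psi_cube \<psi> (\<mu> n Q) x)"
    by (rule Bochner_Integration.integral_sum) (rule ii)
  finally show ?thesis .
qed

lemma ccs_phi_shift: "ccs (\<lambda>x. \<phi> (x - ivec k))"
  using ccs_affine[OF ccs_phi, of 1 "ivec k"] by simp

lemma ccs_psi_shift: "i \<in> {1..<2^CARD('n)} \<Longrightarrow> ccs (\<lambda>x. \<psi> i ((2::real) ^ j *\<^sub>R x - ivec k))"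
  using ccs_affine[OF ccs_psi, of i "(2::real)^j" "ivec k"] by simp

lemma coefC_F: "coefC \<phi> F k = 0"
proof -
  have "coefC \<phi> F k = (\<Sum>n. LINT x|lebesgue. \<phi> (x - ivec k) * H n x)"
    unfolding coefC_def by (rule test_integral(2)[OF ccs_phi_shift])
  also have "\<dots> = (\<Sum>n. 0)"
  proof (rule arg_cong[where f=suminf], rule ext)
    fix n
    have "(LINT x|lebesgue. \<phi> (x - ivec k) * psi_cube \<psi> (\<mu> n Q) x) = 0" for Q
    proof -
      obtain l k' where Q: "\<mu> n Q = (l, k')" by (cases "\<mu> n Q")
      show ?thesis unfolding Q psi_cube_def using phi_perp_psi[OF one_in_I] by simp
    qed
    then show "(LINT x|lebesgue. \<phi> (x - ivec k) * H n x) = 0"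
      by (simp add: integral_gH[OF ccs_phi_shift])
  qed
  finally show ?thesis by simp
qed

lemma coefc_F:
  assumes i: "i \<in> {1..<2^CARD('n)}"
  shows "coefc \<psi> F i j k = cf i j k"
proof -
  define D where "D = (2::real) ^ (CARD('n) * j)"
  have Dpos: "D > 0" unfolding D_def by simp
  have trm: "(LINT x|lebesgue. \<psi> i (2 ^ j *\<^sub>R x - ivec k) * H n x)
      = (if i = 1 \<and> (j, k) \<in> T n then \<sigma> * b n / D else 0)" for n
  proof -
    have "(\<Sum>Q\<in>S n. LINT x|lebesgue. \<psi> i (2 ^ j *\<^sub>R x - ivec k) * psi_cube \<psi> (\<mu> n Q) x)
        = (\<Sum>Q\<in>S n. (\<lambda>P. if i = 1 \<and> P = (j, k) then 1 / D else 0) (\<mu> n Q))"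
    proof (rule sum.cong[OF refl])
      fix Q
      obtain l k' where Q: "\<mu> n Q = (l, k')" by (cases "\<mu> n Q")
      show "(LINT x|lebesgue. \<psi> i (2 ^ j *\<^sub>R x - ivec k) * psi_cube \<psi> (\<mu> n Q) x)
          = (\<lambda>P. if i = 1 \<and> P = (j, k) then 1 / D else 0) (\<mu> n Q)"
        unfolding Q psi_cube_def using psi_inner[OF i one_in_I, of j k l k'] by (auto simp: D_def)
    qed
    also have "\<dots> = (\<Sum>P\<in>T n. if i = 1 \<and> P = (j, k) then 1 / D else 0)"
      unfolding T_def using inj by (simp add: sum.reindex)
    also have "\<dots> = (if i = 1 \<and> (j, k) \<in> T n then 1 / D else 0)"
      using T_fin[of n] by (cases "i = 1") (simp_all add: sum.delta')
    finally show ?thesis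
      by (simp add: integral_gH[OF ccs_psi_shift[OF i]])
  qed
  have "coefc \<psi> F i j k = D * (\<Sum>n. LINT x|lebesgue. \<psi> i (2 ^ j *\<^sub>R x - ivec k) * H n x)"
    unfolding coefc_def D_def by (subst test_integral(2)[OF ccs_psi_shift[OF i]]) simp
  also have "\<dots> = D * (\<Sum>n. if n = j div N then (if i = 1 \<and> (j, k) \<in> T (j div N) then \<sigma> * b (j div N) / D else 0) else 0)"
  proof -
    have "(if i = 1 \<and> (j, k) \<in> T n then \<sigma> * b n / D else 0)
        = (if n = j div N then (if i = 1 \<and> (j, k) \<in> T (j div N) then \<sigma> * b (j div N) / D else 0) else 0)" for n
    proof (cases "(j, k) \<in> T n")
      case True
      then have "j = N * n" using T_lev by fastforce
      then have "n = j div N" using N1 by simp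
      then show ?thesis by simp
    next
      case False
      then show ?thesis by auto
    qed
    then show ?thesis unfolding trm by simp
  qed
  also have "\<dots> = cf i j k"
  proof -
    define X where "X = (if i = 1 \<and> (j, k) \<in> T (j div N) then \<sigma> * b (j div N) / D else 0)"
    have "(\<Sum>n. if n = j div N then X else 0) = X"
      using sums_unique[OF sums_single[of "j div N" "\<lambda>_. X"]] by simp
    then show ?thesis unfolding X_def[symmetric] using Dpos by (simp add: X_def cf_def)
  qed
  finally show ?thesis .
qed

end



context constr
begin

definition A where "A l = {k. (l, k) \<in> T (l div N)}"

lemma A_sub: "A l \<subseteq> snd ` T (l div N)" unfolding A_def by force

lemma A_fin: "finite (A l)" using finite_subset[OF A_sub] T_fin by auto

lemma A_empty: assumes "\<not> N dvd l" shows "A l = {}"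
  unfolding A_def
proof safe
  fix k assume "(l, k) \<in> T (l div N)"
  then have "l = N * (l div N)" using T_lev[of "(l,k)" "l div N"] by simp
  then show "k \<in> {}" using assms by (metis dvd_triv_left)
qed

lemma A_dvd: assumes "N dvd l" shows "A l = snd ` T (l div N)"
proof -
  have "fst P = l" if "P \<in> T (l div N)" for P using T_lev[OF that] assms by simp
  then show ?thesis unfolding A_def by force
qed

lemma inj_snd_T: "inj_on snd (T m)"
  unfolding inj_on_def using T_lev by (metis prod_eq_iff)

lemma card_A: "N dvd l \<Longrightarrow> card (A l) = card (S (l div N))"
  using A_dvd card_image[OF inj_snd_T] card_T by simp

lemma sum_A: assumes "N dvd l"
  shows "(\<Sum>k\<in>A l. \<psi> 1 (2 ^ l *\<^sub>R x - ivec k)) = (\<Sum>Q\<in>S (l div N). psi_cube \<psi> (\<mu> (l div N) Q) x)"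
proof -
  have "(\<Sum>k\<in>A l. \<psi> 1 (2 ^ l *\<^sub>R x - ivec k)) = (\<Sum>P\<in>T (l div N). \<psi> 1 (2 ^ l *\<^sub>R x - ivec (snd P)))"
    unfolding A_dvd[OF assms] by (simp add: sum.reindex[OF inj_snd_T])
  also have "\<dots> = (\<Sum>P\<in>T (l div N). psi_cube \<psi> P x)"
  proof (rule sum.cong[OF refl])
    fix P assume "P \<in> T (l div N)"
    then have "fst P = l" using T_lev assms by simp
    then show "\<psi> 1 (2 ^ l *\<^sub>R x - ivec (snd P)) = psi_cube \<psi> P x"
      unfolding psi_cube_def by (cases P) simp
  qed
  also have "\<dots> = (\<Sum>Q\<in>S (l div N). psi_cube \<psi> (\<mu> (l div N) Q) x)"
    unfolding T_def using inj by (simp add: sum.reindex)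
  finally show ?thesis .
qed

lemma Qproj_F: "Qproj \<psi> F l x = (if N dvd l then H (l div N) x else 0)"
proof -
  define Y where "Y = infsum (\<lambda>k. cf 1 l k * \<psi> 1 (2 ^ l *\<^sub>R x - ivec k)) UNIV"
  have "Qproj \<psi> F l x = (\<Sum>i::nat\<in>{1..<2^CARD('n)}. if i = 1 then Y else 0)"
    unfolding Qproj_def
  proof (rule sum.cong[OF refl])
    fix i :: nat assume i: "i \<in> {1..<2^CARD('n)}"
    show "infsum (\<lambda>k. coefc \<psi> F i l k * \<psi> i (2 ^ l *\<^sub>R x - ivec k)) UNIV = (if i = 1 then Y else 0)"
      unfolding coefc_F[OF i] Y_def by (auto simp: cf_def)
  qed
  also have "\<dots> = Y" using one_in_I[where 'n='n] by (simp add: sum.delta')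
  also have "Y = (\<Sum>k\<in>A l. cf 1 l k * \<psi> 1 (2 ^ l *\<^sub>R x - ivec k))"
    unfolding Y_def by (rule infsum_fin_supp(1)[OF A_fin]) (auto simp: cf_def A_def)
  also have "\<dots> = (\<Sum>k\<in>A l. \<sigma> * b (l div N) * \<psi> 1 (2 ^ l *\<^sub>R x - ivec k))"
    by (rule sum.cong) (auto simp: cf_def A_def)
  also have "\<dots> = (if N dvd l then H (l div N) x else 0)"
    using A_empty[of l] sum_A[of l x] unfolding H_def by (auto simp: sum_distrib_left[symmetric] mult.assoc)
  finally show ?thesis .
qed

lemma Pproj_F: "Pproj \<phi> \<psi> F j x = (\<Sum>l<j. if N dvd l then H (l div N) x else 0)"
  unfolding Pproj_def Qproj_F coefC_F by simp

lemma eps_F: "besov_eps \<psi> s p F j = (if N dvd j then 2 powr ((s - real CARD('n) / p) * real j)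
   * (real (card (S (j div N))) * b (j div N) powr p) powr (1/p) else 0)"
proof -
  define Y where "Y = infsum (\<lambda>k. \<bar>cf 1 j k\<bar> powr p) UNIV"
  have "(\<Sum>i\<in>{1..<2^CARD('n)}. infsum (\<lambda>k. \<bar>coefc \<psi> F i j k\<bar> powr p) UNIV)
      = (\<Sum>i::nat\<in>{1..<2^CARD('n)}. if i = 1 then Y else 0)"
  proof (rule sum.cong[OF refl])
    fix i :: nat assume i: "i \<in> {1..<2^CARD('n)}"
    show "infsum (\<lambda>k. \<bar>coefc \<psi> F i j k\<bar> powr p) UNIV = (if i = 1 then Y else 0)"
      unfolding coefc_F[OF i] Y_def by (auto simp: cf_def)
  qed
  also have "\<dots> = Y" using one_in_I[where 'n='n] by (simp add: sum.delta')
  also have "Y = (\<Sum>k\<in>A j. \<bar>cf 1 j k\<bar> powr p)"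
    unfolding Y_def by (rule infsum_fin_supp(1)[OF A_fin]) (auto simp: cf_def A_def)
  also have "\<dots> = (\<Sum>k\<in>A j. \<bar>\<sigma> * b (j div N)\<bar> powr p)"
    by (rule sum.cong) (auto simp: cf_def A_def)
  also have "\<dots> = real (card (A j)) * b (j div N) powr p"
    using sig bnn[of "j div N"] by (simp add: abs_mult)
  finally have E: "(\<Sum>i\<in>{1..<2^CARD('n)}. infsum (\<lambda>k. \<bar>coefc \<psi> F i j k\<bar> powr p) UNIV) = real (card (A j)) * b (j div N) powr p" .
  show ?thesis
    unfolding besov_eps_def E using card_A[of j] A_empty[of j] by auto
qed

lemma besov_F: assumes "summable (\<lambda>j. besov_eps \<psi> s p F j powr 1)"
  shows "besov \<phi> \<psi> s 1 p F"
  unfolding besov_def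
proof (intro conjI allI ballI)
  show "F \<in> borel_measurable lebesgue"
    unfolding F_def[abs_def] using ccs_measurable[OF ccs_H] by (intro borel_measurable_suminf) auto
  show "integrable lebesgue (\<lambda>x. \<phi> (x - ivec k) * F x)" for k
    by (rule test_integral(1)[OF ccs_phi_shift])
  show "integrable lebesgue (\<lambda>x. \<psi> i (2 ^ j *\<^sub>R x - ivec k) * F x)" if "i \<in> {1..<2^CARD('n)}" for i j k
    by (rule test_integral(1)[OF ccs_psi_shift[OF that]])
  show "(\<lambda>k. \<bar>coefC \<phi> F k\<bar> powr p) summable_on UNIV"
    unfolding coefC_F by (rule summable_on_0) simp
  show "(\<lambda>k. \<bar>coefc \<psi> F i j k\<bar> powr p) summable_on UNIV" if "i \<in> {1..<2^CARD('n)}" for i j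
    unfolding coefc_F[OF that] by (rule infsum_fin_supp(2)[OF A_fin]) (auto simp: cf_def A_def)
  show "summable (\<lambda>j. besov_eps \<psi> s p F j powr 1)" by (rule assms)
qed

lemma norm_F: assumes "summable (besov_eps \<psi> s p F)" shows "besov_norm \<phi> \<psi> s 1 p F = (\<Sum>j. besov_eps \<psi> s p F j)"
proof -
  have e0: "besov_eps \<psi> s p F j \<ge> 0" for j unfolding besov_eps_def by simp
  show ?thesis unfolding besov_norm_def coefC_F using e0 suminf_nonneg[OF assms] by simp
qed

end



lemma count_cubes:
  fixes U :: "(real^'n::finite) set"
  assumes bU: "bounded U" and dU: "diameter U \<le> 1 / 2 ^ l"
  shows "finite {k. closed_cube (l, k) \<inter> U \<noteq> {}} \<and> card {k. closed_cube (l, k) \<inter> U \<noteq> {}} \<le> 4 ^ CARD('n)"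
proof (cases "U = {}")
  case True then show ?thesis by simp
next
  case False
  then obtain u where u: "u \<in> U" by blast
  define c where "c m = \<lfloor>u $ m * 2 ^ l\<rfloor>" for m
  define B where "B = Pi UNIV (\<lambda>m. {c m - 2 .. c m + 1})"
  have sub: "{k. closed_cube (l, k) \<inter> U \<noteq> {}} \<subseteq> B"
  proof
    fix k assume "k \<in> {k. closed_cube (l, k) \<inter> U \<noteq> {}}"
    then obtain y where y: "y \<in> closed_cube (l, k)" "y \<in> U" by auto
    have "k m \<in> {c m - 2 .. c m + 1}" for m
    proof -
      have d: "\<bar>y $ m - u $ m\<bar> \<le> 1 / 2 ^ l"
        using component_le_norm_cart[of "y - u" m] diameter_bounded_bound[OF bU y(2) u] dU
        by (simp add: dist_norm)
      have y1: "real_of_int (k m) / 2 ^ l \<le> y $ m" and y2: "y $ m \<le> (real_of_int (k m) + 1) / 2 ^ l"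
        using y(1) unfolding closed_cube_def by auto
      have p: "(0::real) < 2 ^ l" by simp
      have d1: "y $ m \<le> u $ m + 1 / 2 ^ l" and d2: "u $ m - 1 / 2 ^ l \<le> y $ m" using d by (auto simp: abs_le_iff)
      have e1: "(u $ m + 1 / 2 ^ l) * 2 ^ l = u $ m * 2 ^ l + 1" by (simp add: field_simps)
      have e2: "(u $ m - 1 / 2 ^ l) * 2 ^ l = u $ m * 2 ^ l - 1" by (simp add: field_simps)
      have "real_of_int (k m) \<le> y $ m * 2 ^ l" using y1 p by (simp add: divide_le_eq)
      also have "\<dots> \<le> (u $ m + 1 / 2 ^ l) * 2 ^ l" using d1 p by (intro mult_right_mono) auto
      finally have a1: "real_of_int (k m) \<le> u $ m * 2 ^ l + 1" using e1 by simp
      have "u $ m * 2 ^ l - 1 = (u $ m - 1 / 2 ^ l) * 2 ^ l" using e2 by simp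
      also have "\<dots> \<le> y $ m * 2 ^ l" using d2 p by (intro mult_right_mono) auto
      also have "\<dots> \<le> real_of_int (k m) + 1" using y2 p by (simp add: le_divide_eq)
      finally have a2: "u $ m * 2 ^ l - 2 \<le> real_of_int (k m)" by simp
      have "k m \<le> c m + 1" unfolding c_def using a1 by linarith
      moreover have "c m - 2 \<le> k m" unfolding c_def using a2 by linarith
      ultimately show ?thesis by simp
    qed
    then show "k \<in> B" unfolding B_def by auto
  qed
  have finB: "finite B" unfolding B_def PiE_UNIV_domain[symmetric] by (intro finite_PiE) auto
  have "card B = (\<Prod>m\<in>(UNIV::'n set). card {c m - 2 .. c m + 1})"
    unfolding B_def PiE_UNIV_domain[symmetric] by (rule card_PiE) simp
  also have "\<dots> = 4 ^ CARD('n)" by simp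
  finally have "card B = 4 ^ CARD('n)" .
  then show ?thesis using sub finB card_mono[OF finB sub] finite_subset[OF sub finB] by simp
qed

lemma count_level:
  fixes G :: "(real^'n::finite) set"
  assumes fin: "finite F" and cov: "G \<subseteq> \<Union>F" and bd: "\<forall>U\<in>F. bounded U \<and> diameter U \<le> 1 / 2 ^ l"
    and lv: "\<forall>Q\<in>\<Theta>. fst Q = l"
  shows "card {Q\<in>\<Theta>. closed_cube Q \<inter> G \<noteq> {}} \<le> 4 ^ CARD('n) * card F"
proof -
  define C where "C U = (\<lambda>k. (l, k)) ` {k. closed_cube (l, k) \<inter> U \<noteq> {}}" for U :: "(real^'n) set"
  have sub: "{Q\<in>\<Theta>. closed_cube Q \<inter> G \<noteq> {}} \<subseteq> (\<Union>U\<in>F. C U)"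
  proof
    fix Q assume Q: "Q \<in> {Q\<in>\<Theta>. closed_cube Q \<inter> G \<noteq> {}}"
    then obtain y where y: "y \<in> closed_cube Q" "y \<in> G" by auto
    then obtain U where U: "U \<in> F" "y \<in> U" using cov by auto
    have "Q = (l, snd Q)" using Q lv by (metis (mono_tags, lifting) mem_Collect_eq prod.collapse)
    then show "Q \<in> (\<Union>U\<in>F. C U)" unfolding C_def using U y
      by (intro UN_I[OF U(1)]) (rule image_eqI[of _ _ "snd Q"], auto)
  qed
  have cC: "finite (C U) \<and> card (C U) \<le> 4 ^ CARD('n)" if "U \<in> F" for U
  proof -
    have "finite {k. closed_cube (l, k) \<inter> U \<noteq> {}} \<and> card {k. closed_cube (l, k) \<inter> U \<noteq> {}} \<le> 4 ^ CARD('n)"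
      using count_cubes[of U l] bd that by auto
    then show ?thesis unfolding C_def using card_image_le[of "{k. closed_cube (l, k) \<inter> U \<noteq> {}}" "\<lambda>k. (l, k)"] by auto
  qed
  have finU: "finite (\<Union>U\<in>F. C U)" using fin cC by auto
  have "card {Q\<in>\<Theta>. closed_cube Q \<inter> G \<noteq> {}} \<le> card (\<Union>U\<in>F. C U)" by (rule card_mono[OF finU sub])
  also have "\<dots> \<le> (\<Sum>U\<in>F. card (C U))" by (rule card_UN_le[OF fin])
  also have "\<dots> \<le> (\<Sum>U\<in>F. 4 ^ CARD('n))" using cC by (intro sum_mono) auto
  also have "\<dots> = 4 ^ CARD('n) * card F" by simp
  finally show ?thesis .
qed

lemma box_cover:
  fixes G :: "'a::metric_space set"
  assumes "upper_box_dim G < ereal \<beta>"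
  shows "\<exists>\<delta>0>0. \<forall>\<delta>. 0 < \<delta> \<and> \<delta> < \<delta>0 \<longrightarrow> (\<exists>F. finite F \<and> G \<subseteq> \<Union>F \<and> (\<forall>U\<in>F. bounded U \<and> diameter U \<le> \<delta>)
          \<and> real (card F) < \<delta> powr (- \<beta>))"
proof -
  have "eventually (\<lambda>\<delta>. eln (cover_number \<delta> G) / ereal (- ln \<delta>) < ereal \<beta>) (at_right 0)"
    using assms unfolding upper_box_dim_def by (rule Limsup_lessD)
  then obtain b where b: "b > 0" "\<And>\<delta>. \<delta> > 0 \<Longrightarrow> \<delta> < b \<Longrightarrow> eln (cover_number \<delta> G) / ereal (- ln \<delta>) < ereal \<beta>"
    unfolding eventually_at_right_field by auto
  show ?thesis
  proof (intro exI[of _ "min b 1"] conjI allI impI)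
    show "min b 1 > (0::real)" using b by simp
    fix \<delta> :: real assume d: "0 < \<delta> \<and> \<delta> < min b 1"
    define L where "L = - ln \<delta>"
    have L: "L > 0" unfolding L_def using d by simp
    have lt: "eln (cover_number \<delta> G) / ereal L < ereal \<beta>" using b(2)[of \<delta>] d unfolding L_def by simp
    have eq: "\<delta> powr (- \<beta>) = exp (\<beta> * L)" unfolding L_def powr_def using d by simp
    have "cover_number \<delta> G < ereal (exp (\<beta> * L))"
    proof (cases "cover_number \<delta> G")
      case (real r)
      show ?thesis
      proof (cases "r \<le> 0")
        case True then show ?thesis using real by (simp add: le_less_trans[OF True exp_gt_zero])
      next
        case False
        then have "ereal (ln r / L) < ereal \<beta>" using lt real L by (simp add: eln_def)
        then have "ln r < \<beta> * L" using L by (simp add: divide_less_eq)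
        then have "r < exp (\<beta> * L)" using False by (metis exp_less_mono exp_ln not_le)
        then show ?thesis using real by simp
      qed
    next
      case PInf
      then show ?thesis using lt L by (simp add: eln_def)
    next
      case MInf
      then show ?thesis by simp
    qed
    then obtain x where x: "x \<in> {ereal (real (card F)) | F. finite F \<and> G \<subseteq> \<Union>F
       \<and> (\<forall>U\<in>F. bounded U \<and> diameter U \<le> \<delta>)}" "x < ereal (exp (\<beta> * L))"
      unfolding cover_number_def Inf_less_iff by blast
    then show "\<exists>F. finite F \<and> G \<subseteq> \<Union>F \<and> (\<forall>U\<in>F. bounded U \<and> diameter U \<le> \<delta>) \<and> real (card F) < \<delta> powr (- \<beta>)"
      unfolding eq by auto
  qed
qed





lemma summ_bound:
  fixes M c s p d \<beta> t x A :: real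
  assumes M0: "0 \<le> M" and Mb: "M \<le> A * 2 powr (\<beta> * (t + x))" and A: "0 < A" and bd: "\<beta> \<le> d"
    and p: "p \<ge> 1" and s: "s > 0" and x: "x \<ge> 0" and t: "t \<ge> 0" and c: "c \<ge> 0"
  shows "c * 2 powr ((d / p - s) * x) * M powr (- 1 / p) * M / 2 powr (d * x) \<le> (A * 2 powr (d * t)) powr (1 - 1 / p) * c"
proof (cases "M = 0")
  case True then show ?thesis using A c by simp
next
  case False
  then have Mp: "M > 0" using M0 by simp
  define q where "q = 1 - 1 / p"
  have q0: "q \<ge> 0" using p unfolding q_def by (simp add: field_simps)
  have "M powr (- 1 / p) * M = M powr (- 1 / p) * M powr 1" using Mp by simp
  also have "\<dots> = M powr q" unfolding q_def by (subst powr_add[symmetric]) simp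
  also have "\<dots> \<le> (A * 2 powr (\<beta> * (t + x))) powr q"
    by (rule powr_mono2[OF q0 M0 Mb])
  also have "\<dots> \<le> (A * 2 powr (d * (t + x))) powr q"
  proof -
    have "\<beta> * (t + x) \<le> d * (t + x)" using bd t x by (intro mult_right_mono) auto
    then have "2 powr (\<beta> * (t + x)) \<le> 2 powr (d * (t + x))" by simp
    then show ?thesis using A q0 by (intro powr_mono2 mult_left_mono) auto
  qed
  also have "\<dots> = (A * 2 powr (d * t)) powr q * 2 powr (d * q * x)"
  proof -
    have 1: "(A * 2 powr (d * (t + x))) powr q = A powr q * 2 powr (d * (t + x) * q)"
      using A by (simp add: powr_mult powr_powr)
    have 2: "(A * 2 powr (d * t)) powr q * 2 powr (d * q * x) = A powr q * 2 powr (d * t * q + d * q * x)"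
      using A by (simp add: powr_mult powr_powr powr_add)
    have 3: "d * (t + x) * q = d * t * q + d * q * x" by (simp add: algebra_simps)
    show ?thesis unfolding 1 2 3 ..
  qed
  finally have I: "M powr (- 1 / p) * M \<le> (A * 2 powr (d * t)) powr q * 2 powr (d * q * x)" .
  define K where "K = (A * 2 powr (d * t)) powr q"
  have K0: "K \<ge> 0" unfolding K_def by simp
  have "c * 2 powr ((d / p - s) * x) * M powr (- 1 / p) * M / 2 powr (d * x)
      = c * 2 powr ((d / p - s) * x) * (M powr (- 1 / p) * M) / 2 powr (d * x)" by (simp add: mult.assoc)
  also have "\<dots> \<le> c * 2 powr ((d / p - s) * x) * (K * 2 powr (d * q * x)) / 2 powr (d * x)"
    using I c unfolding K_def by (intro divide_right_mono mult_left_mono) auto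
  also have "\<dots> = K * c * (2 powr ((d / p - s) * x) * 2 powr (d * q * x) / 2 powr (d * x))"
    by simp
  also have "2 powr ((d / p - s) * x) * 2 powr (d * q * x) / 2 powr (d * x) = 2 powr ((d / p - s) * x + d * q * x - d * x)"
    by (simp add: powr_add powr_diff)
  also have "(d / p - s) * x + d * q * x - d * x = - s * x"
    unfolding q_def by (simp add: algebra_simps)
  also have "K * c * 2 powr (- s * x) \<le> K * c"
  proof -
    have "2 powr (- s * x) \<le> 2 powr 0" using s x by (subst powr_le_cancel_iff) (auto simp: mult_nonneg_nonneg)
    then have "2 powr (- s * x) \<le> 1" by simp
    then show ?thesis using K0 c by (simp add: mult_left_le)
  qed
  finally show ?thesis unfolding K_def q_def .
qed

lemma eps_bound:
  fixes M c s p d x :: real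
  assumes M0: "0 \<le> M" and p: "p \<ge> 1" and c: "c \<ge> 0"
  shows "2 powr ((s - d / p) * x) * (M * (c * 2 powr ((d / p - s) * x) * M powr (- 1 / p)) powr p) powr (1 / p) \<le> c"
proof (cases "M = 0")
  case True then show ?thesis using c p by simp
next
  case False
  then have Mp: "M > 0" using M0 by simp
  have p0: "p > 0" using p by simp
  define B where "B = c * 2 powr ((d / p - s) * x) * M powr (- 1 / p)"
  have B0: "B \<ge> 0" unfolding B_def using c by simp
  have "(M * B powr p) powr (1 / p) = M powr (1 / p) * (B powr p) powr (1 / p)"
    using Mp B0 by (simp add: powr_mult)
  also have "(B powr p) powr (1 / p) = B" using B0 p0 by (simp add: powr_powr)
  also have "M powr (1 / p) * B = c * 2 powr ((d / p - s) * x) * (M powr (1 / p) * M powr (- 1 / p))"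
    unfolding B_def by (simp add: ac_simps)
  also have "M powr (1 / p) * M powr (- 1 / p) = 1"
    using Mp by (simp add: powr_add[symmetric])
  finally have E: "(M * B powr p) powr (1 / p) = c * 2 powr ((d / p - s) * x)" by simp
  have "2 powr ((s - d / p) * x) * (c * 2 powr ((d / p - s) * x)) = c * (2 powr ((s - d / p) * x) * 2 powr ((d / p - s) * x))"
    by (simp add: ac_simps)
  also have "2 powr ((s - d / p) * x) * 2 powr ((d / p - s) * x) = 2 powr ((s - d / p) * x + (d / p - s) * x)"
    by (simp only: powr_add)
  also have "(s - d / p) * x + (d / p - s) * x = 0" by (simp add: algebra_simps)
  finally have "2 powr ((s - d / p) * x) * (M * B powr p) powr (1 / p) = c" unfolding E by simp
  then show ?thesis unfolding B_def by simp
qed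



lemma Lb_ln:
  fixes r \<gamma> Nr \<alpha> \<beta> p x A4 t e aa d s :: real and m :: nat
  assumes r: "r = 2 powr (- \<gamma>)" and \<gamma>: "\<gamma> = Nr * (\<alpha> - \<beta>) / (2 * p)" and x: "x = Nr * real m"
    and r1: "r < 1" and A4: "A4 > 0" and p: "p > 0" and aa: "aa > 0"
    and e: "e = d / p - s"
  shows "ln ((1 - r) * r ^ m * 2 powr (e * x) * (A4 * 2 powr (\<beta> * (t + x))) powr (- 1 / p) / aa)
       = ln ((1 - r) * A4 powr (- 1 / p) * 2 powr (- \<beta> * t / p) / aa) + ((2 * d - 2 * s * p - \<alpha> - \<beta>) / (2 * p) * x) * ln 2"
proof -
  have rm: "r ^ m = 2 powr (- \<gamma> * real m)" unfolding r by (simp add: powr_power mult.commute)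
  have P: "(A4 * 2 powr (\<beta> * (t + x))) powr (- 1 / p) = A4 powr (- 1 / p) * 2 powr (\<beta> * (t + x) * (- 1 / p))"
    using A4 by (simp add: powr_mult powr_powr)
  define K0 where "K0 = (1 - r) * A4 powr (- 1 / p) * 2 powr (- \<beta> * t / p) / aa"
  have "(1 - r) * r ^ m * 2 powr (e * x) * (A4 * 2 powr (\<beta> * (t + x))) powr (- 1 / p) / aa
      = K0 * (2 powr (- \<gamma> * real m) * 2 powr (e * x) * 2 powr (\<beta> * (t + x) * (- 1 / p)) / 2 powr (- \<beta> * t / p))"
  proof -
    define Z where "Z = (2::real) powr (- \<beta> * t / p)"
    have Z: "Z > 0" unfolding Z_def by simp
    define Rm where "Rm = (2::real) powr (- \<gamma> * real m)"
    define Ex where "Ex = (2::real) powr (e * x)"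
    define Bx where "Bx = (2::real) powr (\<beta> * (t + x) * (- 1 / p))"
    define Ap where "Ap = A4 powr (- 1 / p)"
    have "(1 - r) * Rm * Ex * (Ap * Bx) / aa = ((1 - r) * Ap * Z / aa) * (Rm * Ex * Bx / Z)"
      using Z aa by (simp add: field_simps)
    then show ?thesis unfolding rm P K0_def Z_def Rm_def Ex_def Bx_def Ap_def by simp
  qed
  also have "2 powr (- \<gamma> * real m) * 2 powr (e * x) * 2 powr (\<beta> * (t + x) * (- 1 / p)) / 2 powr (- \<beta> * t / p)
      = 2 powr (- \<gamma> * real m + e * x + \<beta> * (t + x) * (- 1 / p) - (- \<beta> * t / p))"
    by (simp only: powr_add powr_diff)
  also have "- \<gamma> * real m + e * x + \<beta> * (t + x) * (- 1 / p) - (- \<beta> * t / p) = (2 * d - 2 * s * p - \<alpha> - \<beta>) / (2 * p) * x"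
    unfolding \<gamma> e x using p by (simp add: field_simps)
  finally have eq: "(1 - r) * r ^ m * 2 powr (e * x) * (A4 * 2 powr (\<beta> * (t + x))) powr (- 1 / p) / aa
      = K0 * 2 powr ((2 * d - 2 * s * p - \<alpha> - \<beta>) / (2 * p) * x)" .
  have K0: "K0 > 0" unfolding K0_def using r1 A4 aa by simp
  show ?thesis unfolding eq K0_def[symmetric] using K0 by (simp add: ln_mult)
qed

lemma final_ineq:
  fixes lnK A' A0 x j Nr :: real
  assumes "A' > A0" "A' \<ge> 0" "x \<ge> j - Nr" "j \<ge> (A' * Nr - lnK / ln 2) / (A' - A0)"
  shows "lnK + A' * x * ln 2 \<ge> A0 * j * ln 2"
proof -
  have l2: "ln (2::real) > 0" by simp
  have "(A' - A0) * j \<ge> A' * Nr - lnK / ln 2" using assms(1,4) by (simp add: divide_le_eq mult.commute)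
  then have "lnK / ln 2 + A' * x \<ge> A0 * j" using assms(2,3) mult_left_mono[OF assms(3) assms(2)] by (simp add: algebra_simps)
  then have "(lnK / ln 2 + A' * x) * ln 2 \<ge> A0 * j * ln 2" using l2 by (intro mult_right_mono) auto
  then show ?thesis using l2 by (simp add: algebra_simps)
qed




theorem theorem4p2:
  fixes V :: "int \<Rightarrow> (real^'n::finite \<Rightarrow> real) set"
    and \<phi> :: "real^'n \<Rightarrow> real"
    and \<psi> :: "nat \<Rightarrow> real^'n \<Rightarrow> real"
    and s p d' \<alpha> a :: real
    and K G :: "(real^'n) set"
    and t N :: nat
    and \<Theta> :: "nat \<Rightarrow> (nat \<times> ('n \<Rightarrow> int)) set"
    and \<mu> :: "nat \<Rightarrow> nat \<times> ('n \<Rightarrow> int) \<Rightarrow> nat \<times> ('n \<Rightarrow> int)"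
  assumes mra: "orth_mra V \<phi>"
    and wav: "mra_wavelets V \<psi>"
    and smooth_phi: "Ck (nat \<lfloor>s\<rfloor> + 1) \<phi>"
    and smooth_psi: "\<forall>i\<in>{1..<2^CARD('n)}. Ck (nat \<lfloor>s\<rfloor> + 1) (\<psi> i)"
    and supp_phi: "compactly_supported \<phi>"
    and supp_psi: "\<forall>i\<in>{1..<2^CARD('n)}. compactly_supported (\<psi> i)"
    and s_pos: "s > 0"
    and p_ge: "p \<ge> 1"
    and dsp: "real CARD('n) - s * p > 0"
    and d'_gt: "real CARD('n) - s * p < d'"
    and d'_lt: "d' < real CARD('n)"
    and cantor: "adapted_cantor_data \<psi> d' K t N a \<Theta> \<mu>"
    and alpha: "0 < \<alpha>" "\<alpha> < real CARD('n) - s * p"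
    and GK: "G \<subseteq> K"
    and boxG: "upper_box_dim G < ereal \<alpha>"
  shows "\<exists>f. besov \<phi> \<psi> s 1 p f \<and> besov_norm \<phi> \<psi> s 1 p f \<le> 1
           \<and> (\<forall>x\<in>K. \<forall>j. Pproj \<phi> \<psi> f j x \<ge> 0)
           \<and> (\<forall>x\<in>G. Liminf sequentially
                 (\<lambda>j. eln (ereal \<bar>Pproj \<phi> \<psi> f j x\<bar>) / ereal (real j * ln 2))
               \<ge> ereal ((real CARD('n) - s * p - \<alpha>) / p))"
proof -
  have ccsphi: "ccs \<phi>" using Ck_cont[OF smooth_phi] supp_phi unfolding ccs_def by simp
  have ccspsi: "\<And>i. i \<in> {1..<2^CARD('n)} \<Longrightarrow> ccs (\<psi> i)"
    using Ck_cont smooth_psi supp_psi unfolding ccs_def by blast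
  have t1: "t \<ge> 1" and N1: "N \<ge> 1" and a0: "a \<noteq> 0"
    using cantor unfolding adapted_cantor_data_def by auto
  have \<Theta>fin: "\<And>n. finite (\<Theta> n)" and \<Theta>lev: "\<And>n Q. Q \<in> \<Theta> n \<Longrightarrow> fst Q = t + N * n"
    using cantor unfolding adapted_cantor_data_def by auto
  have \<mu>inj: "\<And>n. inj_on (\<mu> n) (\<Theta> n)" and \<mu>lev: "\<And>n Q. Q \<in> \<Theta> n \<Longrightarrow> fst (\<mu> n Q) = N * n"
    using cantor unfolding adapted_cantor_data_def by auto
  have Kdef: "K = (\<Inter>n. cantor_level \<Theta> n)"
    using cantor unfolding adapted_cantor_data_def by auto
  have psic: "\<And>n x Q. x \<in> cantor_level \<Theta> n \<Longrightarrow> Q \<in> \<Theta> n \<Longrightarrow>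
      (x \<in> closed_cube Q \<longrightarrow> a * psi_cube \<psi> (\<mu> n Q) x \<ge> 1) \<and> (x \<notin> closed_cube Q \<longrightarrow> psi_cube \<psi> (\<mu> n Q) x = 0)"
    using cantor unfolding adapted_cantor_data_def by blast
  obtain \<beta> where \<beta>: "upper_box_dim G < ereal \<beta>" "0 < \<beta>" "\<beta> < \<alpha>"
  proof -
    have "max (upper_box_dim G) (ereal 0) < ereal \<alpha>" using boxG alpha(1) by simp
    then obtain z where z: "max (upper_box_dim G) (ereal 0) < ereal z" "ereal z < ereal \<alpha>"
      using ereal_dense2 by blast
    then show ?thesis using that[of z] by simp
  qed
  obtain \<delta>0 where \<delta>0: "\<delta>0 > 0" "\<And>\<delta>. 0 < \<delta> \<Longrightarrow> \<delta> < \<delta>0 \<Longrightarrow> \<exists>F. finite F \<and> G \<subseteq> \<Union>F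
      \<and> (\<forall>U\<in>F. bounded U \<and> diameter U \<le> \<delta>) \<and> real (card F) < \<delta> powr (- \<beta>)"
    using box_cover[OF \<beta>(1)] by blast
  obtain n0 where n0: "(1/2::real) ^ n0 < \<delta>0" using real_arch_pow_inv[OF \<delta>0(1), of "1/2"] by auto
  define S where "S n = (if n0 \<le> n then {Q\<in>\<Theta> n. closed_cube Q \<inter> G \<noteq> {}} else {})" for n
  have S_sub: "S n \<subseteq> \<Theta> n" for n unfolding S_def by auto
  define A4 where "A4 = (4::real) ^ CARD('n)"
  have A4: "A4 > 0" unfolding A4_def by simp
  have Mb: "real (card (S n)) \<le> A4 * 2 powr (\<beta> * (real t + real N * real n))" for n
  proof (cases "n0 \<le> n")
    case False then show ?thesis using A4 by (simp add: S_def)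
  next
    case True
    define l where "l = t + N * n"
    have "(1 / 2 ^ l :: real) = (1/2) ^ l" by (simp add: power_one_over)
    also have "\<dots> \<le> (1/2) ^ n0"
    proof -
      have "n \<le> N * n" using N1 by simp
      then have "n0 \<le> l" using True unfolding l_def by linarith
      then show ?thesis by (intro power_decreasing) auto
    qed
    finally have dl: "(1 / 2 ^ l :: real) < \<delta>0" using n0 by simp
    obtain F where F: "finite F" "G \<subseteq> \<Union>F" "\<forall>U\<in>F. bounded U \<and> diameter U \<le> 1 / 2 ^ l"
        "real (card F) < (1 / 2 ^ l) powr (- \<beta>)"
      using \<delta>0(2)[of "1 / 2 ^ l"] dl by auto
    have "card (S n) \<le> 4 ^ CARD('n) * card F"
      using count_level[OF F(1) F(2) F(3), of "\<Theta> n"] \<Theta>lev True by (simp add: S_def l_def)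
    then have "real (card (S n)) \<le> A4 * real (card F)" unfolding A4_def
      by (metis of_nat_le_iff of_nat_mult of_nat_numeral of_nat_power)
    also have "\<dots> \<le> A4 * (1 / 2 ^ l) powr (- \<beta>)" using F(4) A4 by simp
    also have "(1 / 2 ^ l :: real) powr (- \<beta>) = 2 powr (\<beta> * (real t + real N * real n))"
    proof -
      have "(1 / 2 ^ l :: real) = 2 powr (- real l)" by (simp add: powr_minus powr_realpow divide_inverse)
      then have "(1 / 2 ^ l :: real) powr (- \<beta>) = 2 powr (- real l * - \<beta>)" by (simp add: powr_powr)
      also have "- real l * - \<beta> = \<beta> * (real t + real N * real n)" unfolding l_def by (simp add: algebra_simps)
      finally show ?thesis .
    qed
    finally show ?thesis .
  qed
  define \<gamma> where "\<gamma> = real N * (\<alpha> - \<beta>) / (2 * p)"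
  have \<gamma>: "\<gamma> > 0" unfolding \<gamma>_def using N1 \<beta> p_ge by simp
  define r where "r = (2::real) powr (- \<gamma>)"
  have r: "0 < r" "r < 1"
  proof -
    show "0 < r" unfolding r_def by simp
    have "(2::real) powr (- \<gamma>) < 2 powr 0" using \<gamma> by (subst powr_less_cancel_iff) auto
    then show "r < 1" unfolding r_def by simp
  qed
  define c where "c n = (1 - r) * r ^ n" for n
  have c0: "c n \<ge> 0" for n unfolding c_def using r by simp
  have csum: "c sums 1"
  proof -
    have "(\<lambda>n. (1 - r) * r ^ n) sums ((1 - r) * (1 / (1 - r)))"
      by (rule sums_mult[OF geometric_sums]) (use r in simp)
    then show ?thesis unfolding c_def using r by simp
  qed
  define b where "b n = c n * 2 powr ((real CARD('n) / p - s) * (real N * real n)) * real (card (S n)) powr (- 1 / p)" for n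
  have bnn: "b n \<ge> 0" for n unfolding b_def using c0 by simp
  define \<sigma> where "\<sigma> = sgn a"
  have sig: "\<bar>\<sigma>\<bar> = 1" unfolding \<sigma>_def using a0 by (simp add: abs_sgn)
  have sp0: "s * p > 0" using s_pos p_ge by simp
  have dd: "\<beta> \<le> real CARD('n)" using \<beta> alpha sp0 by linarith
  define KK where "KK = (A4 * 2 powr (real CARD('n) * real t)) powr (1 - 1 / p)"
  have summ: "summable (\<lambda>n. b n * real (card (S n)) / 2 ^ (CARD('n) * (N * n)))"
  proof (rule summable_comparison_test[OF _ summable_mult[OF sums_summable[OF csum], of KK]])
    show "\<exists>M. \<forall>n\<ge>M. norm (b n * real (card (S n)) / 2 ^ (CARD('n) * (N * n))) \<le> KK * c n"
    proof (intro exI[of _ 0] allI impI)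
      fix n :: nat
      have e: "(2::real) ^ (CARD('n) * (N * n)) = 2 powr (real CARD('n) * (real N * real n))"
        by (simp add: powr_realpow[symmetric])
      have "b n * real (card (S n)) / 2 ^ (CARD('n) * (N * n)) \<le> KK * c n"
        unfolding e b_def KK_def
        by (rule summ_bound[OF _ Mb A4 dd _ s_pos _ _ c0]) (use p_ge in auto)
      then show "norm (b n * real (card (S n)) / 2 ^ (CARD('n) * (N * n))) \<le> KK * c n"
        using bnn[of n] by simp
    qed
  qed
  interpret C: constr V \<phi> \<psi> S \<mu> N b \<sigma>
  proof unfold_locales
    show "orth_mra V \<phi>" by (rule mra)
    show "mra_wavelets V \<psi>" by (rule wav)
    show "ccs \<phi>" by (rule ccsphi)
    show "\<And>i. i \<in> {1..<2 ^ CARD('n)} \<Longrightarrow> ccs (\<psi> i)" by (rule ccspsi)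
    show "\<And>n. finite (S n)" using S_sub \<Theta>fin by (meson finite_subset)
    show "\<And>n. inj_on (\<mu> n) (S n)" using S_sub \<mu>inj by (meson inj_on_subset)
    show "\<And>n Q. Q \<in> S n \<Longrightarrow> fst (\<mu> n Q) = N * n" using S_sub \<mu>lev by blast
    show "1 \<le> N" by (rule N1)
    show "\<And>n. 0 \<le> b n" by (rule bnn)
    show "\<bar>\<sigma>\<bar> = 1" by (rule sig)
    show "summable (\<lambda>n. b n * real (card (S n)) / 2 ^ (CARD('n) * (N * n)))" by (rule summ)
  qed
  have Hrew: "C.H m x = b m * (\<Sum>Q\<in>S m. \<sigma> * psi_cube \<psi> (\<mu> m Q) x)" for m x
    unfolding C.H_def by (simp add: sum_distrib_left ac_simps)
  have xlev: "x \<in> cantor_level \<Theta> m" if "x \<in> K" for x m using that Kdef by auto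
  have termlb: "\<sigma> * psi_cube \<psi> (\<mu> m Q) x \<ge> 1 / \<bar>a\<bar>"
    if "x \<in> K" "Q \<in> S m" "x \<in> closed_cube Q" for x m Q
  proof -
    have "a * psi_cube \<psi> (\<mu> m Q) x \<ge> 1" using psic[OF xlev[OF that(1)] subsetD[OF S_sub that(2)]] that(3) by blast
    moreover have "\<sigma> * psi_cube \<psi> (\<mu> m Q) x = (a * psi_cube \<psi> (\<mu> m Q) x) / \<bar>a\<bar>"
      unfolding \<sigma>_def using a0 by (simp add: sgn_if)
    ultimately show ?thesis using a0 by (simp add: divide_right_mono)
  qed
  have termnn: "\<sigma> * psi_cube \<psi> (\<mu> m Q) x \<ge> 0" if "x \<in> K" "Q \<in> S m" for x m Q
  proof (cases "x \<in> closed_cube Q")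
    case True
    have "1 / \<bar>a\<bar> \<ge> 0" by simp
    then show ?thesis using termlb[OF that True] by linarith
  next
    case False
    then have "psi_cube \<psi> (\<mu> m Q) x = 0" using psic[OF xlev[OF that(1)] subsetD[OF S_sub that(2)]] by blast
    then show ?thesis by simp
  qed
  have Hnn: "C.H m x \<ge> 0" if "x \<in> K" for m x
    unfolding Hrew by (rule mult_nonneg_nonneg[OF bnn sum_nonneg]) (rule termnn[OF that])
  have gnn: "(if N dvd l then C.H (l div N) x else 0) \<ge> 0" if "x \<in> K" for l x
    using Hnn[OF that] by simp
  define A0 where "A0 = (real CARD('n) - s * p - \<alpha>) / p"
  define A' where "A' = (2 * real CARD('n) - 2 * s * p - \<alpha> - \<beta>) / (2 * p)"
  have A'A0: "A' > A0" unfolding A'_def A0_def using \<beta> p_ge by (simp add: field_simps)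
  have A'0: "A' \<ge> 0" unfolding A'_def using \<beta> alpha p_ge by (simp add: field_simps)
  define K0 where "K0 = (1 - r) * A4 powr (- 1 / p) * 2 powr (- \<beta> * real t / p) / \<bar>a\<bar>"
  define J0 where "J0 = (A' * real N - ln K0 / ln 2) / (A' - A0)"
  show ?thesis
  proof (intro exI[of _ C.F] conjI ballI allI)
    define Cj where "Cj j = (if N dvd j then c (j div N) else 0)" for j
    have Cjsum: "Cj sums 1"
    proof -
      have sm: "strict_mono (\<lambda>m. N * m)" using N1 by (intro strict_monoI) simp
      have "(\<lambda>m. Cj (N * m)) = c" unfolding Cj_def using N1 by (auto simp: fun_eq_iff)
      then have "(\<lambda>m. Cj (N * m)) sums 1" using csum by simp
      then show ?thesis
        by (subst (asm) sums_mono_reindex[OF sm]) (auto simp: Cj_def elim!: dvdE)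
    qed
    have eps_le: "besov_eps \<psi> s p C.F j \<le> Cj j" for j
    proof (cases "N dvd j")
      case False then show ?thesis unfolding C.eps_F Cj_def by simp
    next
      case True
      then have jj: "real j = real N * real (j div N)" by (metis dvd_mult_div_cancel of_nat_mult)
      have E: "2 powr ((s - real CARD('n) / p) * real j) * (real (card (S (j div N))) * b (j div N) powr p) powr (1 / p) \<le> c (j div N)"
        unfolding b_def jj by (rule eps_bound[OF _ p_ge c0]) simp
      show ?thesis unfolding C.eps_F Cj_def using True E by simp
    qed
    have eps_nn: "besov_eps \<psi> s p C.F j \<ge> 0" for j unfolding besov_eps_def by simp
    have eps_summ: "summable (besov_eps \<psi> s p C.F)"
      by (rule summable_comparison_test[OF _ sums_summable[OF Cjsum]]) (use eps_le eps_nn in auto)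
    show "besov \<phi> \<psi> s 1 p C.F"
      by (rule C.besov_F) (use eps_summ eps_nn in simp)
    have "(\<Sum>j. besov_eps \<psi> s p C.F j) \<le> (\<Sum>j. Cj j)"
      by (rule suminf_le[OF eps_le eps_summ sums_summable[OF Cjsum]])
    then show "besov_norm \<phi> \<psi> s 1 p C.F \<le> 1"
      unfolding C.norm_F[OF eps_summ] using sums_unique[OF Cjsum] by simp
    show "Pproj \<phi> \<psi> C.F j x \<ge> 0" if "x \<in> K" for x j
      unfolding C.Pproj_F using gnn[OF that] by (intro sum_nonneg) auto
    fix x assume xG: "x \<in> G"
    have xK: "x \<in> K" using xG GK by auto
    have ev: "\<forall>j\<ge>max (N * n0 + 1) (nat \<lceil>J0\<rceil>). ereal A0 \<le> eln (ereal \<bar>Pproj \<phi> \<psi> C.F j x\<bar>) / ereal (real j * ln 2)"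
    proof (intro allI impI)
      fix j assume j: "max (N * n0 + 1) (nat \<lceil>J0\<rceil>) \<le> j"
      define m where "m = (j - 1) div N"
      have j1: "j \<ge> 1" "j \<ge> N * n0 + 1" "real j \<ge> J0" using j by auto
      have m0: "n0 \<le> m"
      proof -
        have "N * n0 \<le> j - 1" using j1 by linarith
        then have "(N * n0) div N \<le> (j - 1) div N" by (rule div_le_mono)
        then show ?thesis unfolding m_def using N1 by simp
      qed
      have mj1: "N * m < j"
      proof -
        have "N * m \<le> j - 1" unfolding m_def by (rule times_div_less_eq_dividend)
        then show ?thesis using j1 by linarith
      qed
      have mj2: "real j - real N \<le> real (N * m)"
      proof -
        have "j - 1 = N * m + (j - 1) mod N" unfolding m_def by simp
        moreover have "(j - 1) mod N < N" using N1 by simp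
        ultimately have "j \<le> N * m + N" using j1 by linarith
        then show ?thesis by linarith
      qed
      obtain Q where Q: "Q \<in> \<Theta> m" "x \<in> closed_cube Q" using xlev[OF xK, of m] unfolding cantor_level_def by blast
      have QS: "Q \<in> S m" unfolding S_def using m0 Q xG by auto
      have Sfin: "finite (S m)" using S_sub \<Theta>fin by (meson finite_subset)
      have card1: "real (card (S m)) \<ge> 1" using QS Sfin card_0_eq[OF Sfin] by (cases "card (S m)") auto
      have Hlb: "C.H m x \<ge> b m / \<bar>a\<bar>"
      proof -
        have "\<sigma> * psi_cube \<psi> (\<mu> m Q) x \<le> (\<Sum>Q\<in>S m. \<sigma> * psi_cube \<psi> (\<mu> m Q) x)"
          by (rule member_le_sum[OF QS]) (use termnn[OF xK] Sfin in auto)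
        then have "1 / \<bar>a\<bar> \<le> (\<Sum>Q\<in>S m. \<sigma> * psi_cube \<psi> (\<mu> m Q) x)" using termlb[OF xK QS Q(2)] by linarith
        then have "b m * (1 / \<bar>a\<bar>) \<le> C.H m x" unfolding Hrew using bnn by (intro mult_left_mono) auto
        then show ?thesis by simp
      qed
      have PH: "Pproj \<phi> \<psi> C.F j x \<ge> C.H m x"
      proof -
        have "(if N dvd (N * m) then C.H ((N * m) div N) x else 0) \<le> (\<Sum>l<j. if N dvd l then C.H (l div N) x else 0)"
          by (rule member_le_sum) (use mj1 gnn[OF xK] in auto)
        then show ?thesis unfolding C.Pproj_F using N1 by simp
      qed
      define xr where "xr = real N * real m"
      define bL where "bL = c m * 2 powr ((real CARD('n) / p - s) * xr) * (A4 * 2 powr (\<beta> * (real t + xr))) powr (- 1 / p)"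
      have bL: "b m \<ge> bL"
      proof -
        have "(A4 * 2 powr (\<beta> * (real t + xr))) powr (- 1 / p) \<le> real (card (S m)) powr (- 1 / p)"
          using Mb[of m] card1 p_ge unfolding xr_def by (intro powr_mono2') auto
        then show ?thesis unfolding bL_def b_def xr_def using c0[of m] by (intro mult_left_mono) auto
      qed
      have bLpos: "bL > 0" unfolding bL_def c_def using r A4 by simp
      have Ppos: "Pproj \<phi> \<psi> C.F j x \<ge> bL / \<bar>a\<bar>"
        using PH Hlb bL a0 by (meson divide_right_mono abs_ge_zero order_trans)
      have Lpos: "bL / \<bar>a\<bar> > 0" using bLpos a0 by simp
      have lnL: "ln (bL / \<bar>a\<bar>) = ln K0 + (A' * xr) * ln 2"
        unfolding bL_def c_def K0_def A'_def
        by (rule Lb_ln[of r \<gamma> "real N" \<alpha> \<beta> p xr m A4 "\<bar>a\<bar>" "real CARD('n) / p - s" "real CARD('n)" s "real t"])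
           (use r_def \<gamma>_def xr_def r A4 p_ge a0 in auto)
      have "ln K0 + A' * xr * ln 2 \<ge> A0 * real j * ln 2"
        by (rule final_ineq[OF A'A0 A'0]) (use mj2 j1 J0_def xr_def in auto)
      then have lnP: "ln (Pproj \<phi> \<psi> C.F j x) \<ge> A0 * real j * ln 2"
        using lnL ln_le_cancel_iff[OF Lpos] Ppos Lpos by (smt (verit) ln_le_cancel_iff)
      have Pp: "Pproj \<phi> \<psi> C.F j x > 0" using Ppos Lpos by linarith
      have jl: "real j * ln 2 > 0" using j1 by simp
      have "eln (ereal \<bar>Pproj \<phi> \<psi> C.F j x\<bar>) = ereal (ln (Pproj \<phi> \<psi> C.F j x))"
        using Pp by (simp add: eln_def)
      moreover have "A0 \<le> ln (Pproj \<phi> \<psi> C.F j x) / (real j * ln 2)"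
        using lnP jl by (simp add: pos_le_divide_eq mult.assoc)
      moreover have "ereal (ln (Pproj \<phi> \<psi> C.F j x)) / ereal (real j * ln 2) = ereal (ln (Pproj \<phi> \<psi> C.F j x) / (real j * ln 2))"
      proof -
        have jz: "real j * ln 2 \<noteq> 0" using jl by linarith
        show ?thesis unfolding ereal_divide if_not_P[OF jz] ..
      qed
      ultimately show "ereal A0 \<le> eln (ereal \<bar>Pproj \<phi> \<psi> C.F j x\<bar>) / ereal (real j * ln 2)"
        by (simp only: ereal_less_eq(3))
    qed
    show "Liminf sequentially (\<lambda>j. eln (ereal \<bar>Pproj \<phi> \<psi> C.F j x\<bar>) / ereal (real j * ln 2))
               \<ge> ereal ((real CARD('n) - s * p - \<alpha>) / p)"
      unfolding A0_def[symmetric]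
    proof (rule Liminf_bounded)
      show "eventually (\<lambda>j. ereal A0 \<le> eln (ereal \<bar>Pproj \<phi> \<psi> C.F j x\<bar>) / ereal (real j * ln 2)) sequentially"
        unfolding eventually_sequentially using ev by blast
    qed
  qed
qed


end
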